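(* Let $\rho=\begin{pmatrix}p&z\\ z^*&1-p\end{pmatrix}$ be a single-qubit state with $\min\{p,1-p\}<|z|<\sqrt{p(1-p)}$. Then $C_{d,\mathrm{PIO}}(\rho)=0$ and $C_{c,\mathrm{PIO}}(\rho)=+\infty$.
   Context: Fixed computational basis. PIO: channels $X\mapsto\sum_{\alpha,\beta}p_\alpha U_{\alpha,\beta}\Pi_{\beta|\alpha}X\Pi_{\beta|\alpha}U_{\alpha,\beta}^\dagger$ with $p$ a probability distribution, $U_{\alpha,\beta}$ incoherent unitaries (permutation times diagonal unitary), and for each $\alpha$ incoherent projectors $\Pi_{\beta|\alpha}=\sum_{i\in I}|i\rangle\langle i|$ summing to the identity; different input/output dimensions are handled by identifying spaces with spans of subsets of basis vectors of a common space (appending incoherent states, relabelling basis vectors, discarding subsystems allowed). $\Psi_{2^m}=2^{-m/2}\sum_{i=1}^{2^m}|i\rangle$. Distillable coherence $C_{d,\mathrm{PIO}}(\rho)=\sup\{r:\lim_n\inf_{\Lambda\in\mathrm{PIO}}\|\Lambda(\rho^{\otimes n})-\Psi_{2^{\lfloor rn\rfloor}}\|_1=0\}$; coherence cost $C_{c,\mathrm{PIO}}(\rho)=\inf\{r:\lim_n\inf_{\Lambda\in\mathrm{PIO}}\|\Lambda(\Psi_{2^{\lfloor rn\rfloor}})-\rho^{\otimes n}\|_1=0\}$ ($\inf\emptyset=+\infty$). *)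

theory Defs
  imports "HOL-Analysis.Analysis" "HOL-Library.Extended_Real"
begin

text \<open>Operators on the span of the first d computational basis vectors are represented
  as functions nat => nat => complex (matrix entries), vanishing outside {0..<d} x {0..<d}.
  Basis vector number i (1-based in the paper) is index i-1 here.\<close>

type_synonym cmat = "nat \<Rightarrow> nat \<Rightarrow> complex"

definition supported :: "nat \<Rightarrow> cmat \<Rightarrow> bool" where
  "supported d X \<longleftrightarrow> (\<forall>i j. (d \<le> i \<or> d \<le> j) \<longrightarrow> X i j = 0)"

definition mmult :: "nat \<Rightarrow> cmat \<Rightarrow> cmat \<Rightarrow> cmat" where
  "mmult d A B = (\<lambda>i j. \<Sum>k<d. A i k * B k j)"

definition adj :: "cmat \<Rightarrow> cmat" where
  "adj A = (\<lambda>i j. cnj (A j i))"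

definition psd :: "nat \<Rightarrow> cmat \<Rightarrow> bool" where
  "psd d B \<longleftrightarrow> supported d B \<and> (\<forall>i j. B i j = cnj (B j i)) \<and>
     (\<forall>v :: nat \<Rightarrow> complex. 0 \<le> Re (\<Sum>i<d. \<Sum>j<d. cnj (v i) * B i j * v j))"

definition trace_norm :: "nat \<Rightarrow> cmat \<Rightarrow> real" where
  "trace_norm d A = Re (\<Sum>i<d. (THE B. psd d B \<and>
      (\<forall>i<d. \<forall>j<d. mmult d B B i j = mmult d (adj A) A i j)) i i)"

text \<open>Tensor product A \<otimes> B, where B acts on d2 dimensions: index i = i1 * d2 + i2.\<close>
definition tensor :: "nat \<Rightarrow> cmat \<Rightarrow> cmat \<Rightarrow> cmat" where
  "tensor d2 A B = (\<lambda>i j. A (i div d2) (j div d2) * B (i mod d2) (j mod d2))"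

definition one_dim :: cmat where
  "one_dim = (\<lambda>i j. if i = 0 \<and> j = 0 then 1 else 0)"

fun tpow :: "cmat \<Rightarrow> nat \<Rightarrow> cmat" where
  "tpow A 0 = one_dim"
| "tpow A (Suc n) = tensor 2 (tpow A n) A"

definition qubit :: "real \<Rightarrow> complex \<Rightarrow> cmat" where
  "qubit p z = (\<lambda>i j. if i = 0 \<and> j = 0 then complex_of_real p
      else if i = 0 \<and> j = 1 then z
      else if i = 1 \<and> j = 0 then cnj z
      else if i = 1 \<and> j = 1 then complex_of_real (1 - p) else 0)"

text \<open>Maximally coherent state Psi_d = |psi><psi|, psi = d^(-1/2) sum_i |i>.\<close>
definition Psi :: "nat \<Rightarrow> cmat" where
  "Psi d = (\<lambda>i j. if i < d \<and> j < d then complex_of_real (1 / real d) else 0)"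

text \<open>Action of a PIO on the common space span{|0>,...,|N-1>}:
  X \<mapsto> sum_alpha p_alpha sum_beta U_{alpha,beta} Pi_{beta|alpha} X Pi_{beta|alpha} U_{alpha,beta}^dagger,
  where alpha ranges over {0..<K}, Pi_{beta|alpha} = sum of |k><k| over k < N with blk alpha k = beta
  (so these incoherent projectors sum to the identity), and
  U_{alpha,beta} = sum_k phi alpha beta k |sigma alpha beta k><k| (a permutation times a diagonal unitary).\<close>
definition pio_apply ::
  "nat \<Rightarrow> nat \<Rightarrow> (nat \<Rightarrow> real) \<Rightarrow> (nat \<Rightarrow> nat \<Rightarrow> nat) \<Rightarrow> (nat \<Rightarrow> nat \<Rightarrow> nat \<Rightarrow> nat)
    \<Rightarrow> (nat \<Rightarrow> nat \<Rightarrow> nat \<Rightarrow> complex) \<Rightarrow> cmat \<Rightarrow> cmat" where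
  "pio_apply N K p blk \<sigma> \<phi> X = (\<lambda>i j. \<Sum>\<alpha><K. complex_of_real (p \<alpha>) *
      (\<Sum>\<beta>\<in>blk \<alpha> ` {..<N}. \<Sum>k<N. \<Sum>l<N.
         if \<sigma> \<alpha> \<beta> k = i \<and> \<sigma> \<alpha> \<beta> l = j \<and> blk \<alpha> k = \<beta> \<and> blk \<alpha> l = \<beta>
         then \<phi> \<alpha> \<beta> k * X k l * cnj (\<phi> \<alpha> \<beta> l) else 0))"

text \<open>PIO from a d_in-dimensional to a d_out-dimensional space: both are identified with
  the spans of the first d_in resp. d_out basis vectors of a common N-dimensional space
  (other identifications differ only by incoherent permutations, absorbed into the U's),
  and the channel must map operators on the input space to operators on the output space.\<close>
definition PIO :: "nat \<Rightarrow> nat \<Rightarrow> (cmat \<Rightarrow> cmat) \<Rightarrow> bool" where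
  "PIO din dout \<Lambda> \<longleftrightarrow> (\<exists>N K p blk \<sigma> \<phi>.
      din \<le> N \<and> dout \<le> N \<and>
      (\<forall>\<alpha><K. 0 \<le> p \<alpha>) \<and> (\<Sum>\<alpha><K. p \<alpha>) = 1 \<and>
      (\<forall>\<alpha> \<beta>. \<sigma> \<alpha> \<beta> permutes {..<N}) \<and>
      (\<forall>\<alpha> \<beta> k. cmod (\<phi> \<alpha> \<beta> k) = 1) \<and>
      (\<forall>X. supported din X \<longrightarrow> supported dout (pio_apply N K p blk \<sigma> \<phi> X)) \<and>
      (\<forall>X. supported din X \<longrightarrow> \<Lambda> X = pio_apply N K p blk \<sigma> \<phi> X))"

definition C_d_PIO :: "cmat \<Rightarrow> ereal" where
  "C_d_PIO \<rho> = Sup {ereal r | r.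
     ((\<lambda>n. Inf {trace_norm (2 ^ nat \<lfloor>r * real n\<rfloor>)
                   (\<lambda>i j. \<Lambda> (tpow \<rho> n) i j - Psi (2 ^ nat \<lfloor>r * real n\<rfloor>) i j) | \<Lambda>.
                PIO (2 ^ n) (2 ^ nat \<lfloor>r * real n\<rfloor>) \<Lambda>}) \<longlongrightarrow> 0) sequentially}"

text \<open>Coherence cost under PIO of a single-qubit state (Inf of the empty set is +infinity).\<close>
definition C_c_PIO :: "cmat \<Rightarrow> ereal" where
  "C_c_PIO \<rho> = Inf {ereal r | r.
     ((\<lambda>n. Inf {trace_norm (2 ^ n)
                   (\<lambda>i j. \<Lambda> (Psi (2 ^ nat \<lfloor>r * real n\<rfloor>)) i j - tpow \<rho> n i j) | \<Lambda>.
                PIO (2 ^ nat \<lfloor>r * real n\<rfloor>) (2 ^ n) \<Lambda>}) \<longlongrightarrow> 0) sequentially}"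

end

theory Submission
  imports Defs "Jordan_Normal_Form.Spectral_Radius"
begin


definition hermit :: "nat \<Rightarrow> cmat \<Rightarrow> bool" where
  "hermit d M \<longleftrightarrow> supported d M \<and> (\<forall>i j. M i j = cnj (M j i))"

lemma eigvec_exists:
  assumes "hermit n M" and "0 < n"
  shows "\<exists>v e. (\<forall>k. n \<le> k \<longrightarrow> v k = 0) \<and> (\<Sum>k<n. cnj (v k) * v k) = 1 \<and>
    (\<forall>i<n. (\<Sum>j<n. M i j * v j) = complex_of_real e * v i)"
proof -
  define A where "A = mat n n (\<lambda>(i,j). M i j)"
  have A: "A \<in> carrier_mat n n" unfolding A_def by simp
  from spectrum_non_empty[OF A assms(2)] obtain e where "eigenvalue A e"
    unfolding spectrum_def by auto
  then obtain v0 where ev: "eigenvector A v0 e" unfolding eigenvalue_def by auto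
  hence v0: "v0 \<in> carrier_vec n" "v0 \<noteq> 0\<^sub>v n" "A *\<^sub>v v0 = e \<cdot>\<^sub>v v0"
    unfolding eigenvector_def using A by auto
  define vf where "vf = (\<lambda>k. if k < n then v0 $ k else 0)"
  have eq: "(\<Sum>j<n. M i j * vf j) = e * vf i" if "i < n" for i
  proof -
    have "(A *\<^sub>v v0) $ i = e * v0 $ i" using v0 that by simp
    moreover have "(A *\<^sub>v v0) $ i = (\<Sum>j<n. M i j * vf j)"
      using that v0(1) unfolding A_def vf_def
      by (auto simp: mult_mat_vec_def scalar_prod_def row_def lessThan_atLeast0 intro!: sum.cong)
    ultimately show ?thesis using that vf_def by simp
  qed
  have "\<exists>k0. k0 < n \<and> v0 $ k0 \<noteq> 0"
  proof (rule ccontr)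
    assume "\<not> ?thesis"
    hence "\<forall>k<n. v0 $ k = 0" by blast
    hence "v0 = 0\<^sub>v n" using v0(1) by (intro eq_vecI) auto
    with v0(2) show False by simp
  qed
  then obtain k0 where k0: "k0 < n" "v0 $ k0 \<noteq> 0" by blast
  define nrm where "nrm = (\<Sum>k<n. (cmod (vf k))\<^sup>2)"
  have nrmpos: "nrm > 0"
  proof -
    have "(cmod (vf k0))\<^sup>2 > 0" using k0 vf_def by simp
    moreover have "(cmod (vf k0))\<^sup>2 \<le> nrm" unfolding nrm_def
      by (rule member_le_sum) (use k0 in auto)
    ultimately show ?thesis by linarith
  qed
  have cc: "cnj z * z = complex_of_real ((cmod z)\<^sup>2)" for z
    using complex_norm_square[of z] by (simp add: mult.commute)
  define q where "q = (\<Sum>i<n. \<Sum>j<n. cnj (vf i) * M i j * vf j)"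
  have q1: "q = e * complex_of_real nrm"
  proof -
    have "q = (\<Sum>i<n. cnj (vf i) * (\<Sum>j<n. M i j * vf j))"
      unfolding q_def by (simp add: sum_distrib_left mult.assoc)
    also have "\<dots> = (\<Sum>i<n. e * (cnj (vf i) * vf i))" using eq by (simp add: ac_simps)
    also have "\<dots> = e * complex_of_real nrm" unfolding nrm_def
      by (simp add: sum_distrib_left cc)
    finally show ?thesis .
  qed
  have herm: "cnj (M i j) = M j i" for i j using assms(1) unfolding hermit_def
    by (metis complex_cnj_cnj)
  have q2: "cnj q = q"
  proof -
    have "cnj q = (\<Sum>i<n. \<Sum>j<n. vf i * cnj (M i j) * cnj (vf j))" unfolding q_def by simp
    also have "\<dots> = (\<Sum>i<n. \<Sum>j<n. vf i * M j i * cnj (vf j))"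
      using herm by simp
    also have "\<dots> = q" unfolding q_def by (subst sum.swap) (simp add: ac_simps)
    finally show ?thesis .
  qed
  have ereal: "e = complex_of_real (Re e)"
  proof -
    have "e = q / complex_of_real nrm" using q1 nrmpos by simp
    moreover have "Im q = 0" using q2 by (metis cnj.sel(2) complex_cnj_cancel_iff equal_neg_zero)
    ultimately show ?thesis by (simp add: complex_eq_iff)
  qed
  define v where "v = (\<lambda>k. vf k / complex_of_real (sqrt nrm))"
  have "(\<Sum>k<n. cnj (v k) * v k) = (\<Sum>k<n. cnj (vf k) * vf k) / complex_of_real nrm"
    unfolding v_def using nrmpos
    by (simp add: sum_divide_distrib power2_eq_square[symmetric] flip: of_real_power)
  also have "\<dots> = 1"
  proof -
    have S: "(\<Sum>k<n. cnj (vf k) * vf k) = complex_of_real nrm"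
      unfolding nrm_def of_real_sum by (simp add: cc)
    show ?thesis using nrmpos by (simp add: S)
  qed
  finally have n1: "(\<Sum>k<n. cnj (v k) * v k) = 1" .
  show ?thesis
  proof (intro exI conjI allI impI)
    show "n \<le> k \<Longrightarrow> v k = 0" for k unfolding v_def vf_def by simp
    show "(\<Sum>k<n. cnj (v k) * v k) = 1" by (fact n1)
    show "(\<Sum>j<n. M i j * v j) = complex_of_real (Re e) * v i" if "i < n" for i
    proof -
      have "(\<Sum>j<n. M i j * v j) = (\<Sum>j<n. M i j * vf j) / complex_of_real (sqrt nrm)"
        unfolding v_def by (simp add: sum_divide_distrib)
      also have "\<dots> = complex_of_real (Re e) * v i" using eq[OF that] ereal unfolding v_def
        by (metis times_divide_eq_right)
      finally show ?thesis .
    qed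
  qed
qed



definition Idm :: "nat \<Rightarrow> cmat" where
  "Idm d = (\<lambda>i j. if i = j \<and> i < d then 1 else 0)"

definition ip :: "nat \<Rightarrow> (nat \<Rightarrow> complex) \<Rightarrow> (nat \<Rightarrow> complex) \<Rightarrow> complex" where
  "ip d x y = (\<Sum>k<d. cnj (x k) * y k)"

lemma cnj_mult_self: "cnj z * z = complex_of_real ((cmod z)\<^sup>2)"
  using complex_norm_square[of z] by (simp add: mult.commute)

lemma sumsq: "(\<Sum>k\<in>A. cnj (f k) * f k) = complex_of_real (\<Sum>k\<in>A. (cmod (f k))\<^sup>2)"
  unfolding of_real_sum by (simp add: cnj_mult_self)

lemma sum_Idm_l: "(\<Sum>k<D. Idm D a k * f k) = (if a < D then f a else 0)"
  unfolding Idm_def by (cases "a < D") (auto simp: if_distrib[of "\<lambda>x. x * _"] cong: if_cong)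

lemma sum_Idm_r: "(\<Sum>k<D. f k * Idm D k b) = (if b < D then f b else 0)"
  unfolding Idm_def by (cases "b < D") (auto simp: if_distrib[of "\<lambda>x. _ * x"] cong: if_cong)

lemma householder:
  assumes unit: "ip D v v = 1" and supp: "\<forall>k. D \<le> k \<longrightarrow> v k = 0" and dD: "d < D"
  shows "\<exists>R s. hermit D R \<and> mmult D R R = Idm D \<and> (\<forall>a. R a d = cnj s * v a) \<and> cmod s = 1"
proof -
  define t where "t = cmod (v d)"
  define s where "s = (if v d = 0 then 1 else v d / complex_of_real t)"
  have s1: "cmod s = 1" unfolding s_def t_def by (simp add: norm_divide)
  have vd: "v d = s * complex_of_real t" unfolding s_def t_def by auto
  have cs: "cnj s * s = 1" using s1 cnj_mult_self[of s] by simp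
  define w where "w = (\<lambda>k. v k - (if k = d then s else 0))"
  have wsupp: "w k = 0" if "D \<le> k" for k using supp that dD unfolding w_def by auto
  have nw: "(\<Sum>k<D. cnj (w k) * w k) = complex_of_real (2 - 2 * t)"
  proof -
    have tw: "cnj (w k) * w k = cnj (v k) * v k + (if k = d then cnj s * s - cnj (v k) * s - cnj s * v k else 0)" for k
      unfolding w_def by (simp add: algebra_simps)
    have "(\<Sum>k<D. cnj (w k) * w k) = (\<Sum>k<D. cnj (v k) * v k) + (\<Sum>k<D. (if k = d then cnj s * s - cnj (v k) * s - cnj s * v k else 0))"
      unfolding tw by (rule sum.distrib)
    also have "\<dots> = 1 - (cnj (v d) * s + cnj s * v d - 1)"
      using unit dD cs unfolding ip_def by simp
    also have "\<dots> = complex_of_real (2 - 2 * t)" using vd cs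
      by (simp add: algebra_simps)
    finally show ?thesis .
  qed
  have t1: "t \<le> 1"
  proof -
    have "Re (complex_of_real (2 - 2 * t)) \<ge> 0" unfolding nw[symmetric]
      by (simp add: cnj_mult_self sum_nonneg)
    thus ?thesis by simp
  qed
  define c where "c = (if t = 1 then 0 else 1 / (1 - t))"
  have w0: "w k = 0" if "t = 1" "k < D" for k
  proof -
    have "(\<Sum>k<D. (cmod (w k))\<^sup>2) = 0"
    proof -
      from nw[unfolded sumsq] have "(\<Sum>k<D. (cmod (w k))\<^sup>2) = 2 - 2 * t"
        by (simp only: of_real_eq_iff)
      thus ?thesis using that(1) by simp
    qed
    hence "\<forall>k\<in>{..<D}. (cmod (w k))\<^sup>2 = 0" by (subst sum_nonneg_eq_0_iff[symmetric]) auto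
    thus ?thesis using that by simp
  qed
  define R where "R = (\<lambda>a b. Idm D a b - complex_of_real c * w a * cnj (w b))"
  have herm: "hermit D R"
    unfolding hermit_def supported_def R_def Idm_def using wsupp by auto
  have RR: "mmult D R R = Idm D"
  proof (intro ext)
    fix a b
    have tm: "R a k * R k b = Idm D a k * Idm D k b - complex_of_real c * (w a * (cnj (w k) * Idm D k b))
       - complex_of_real c * (cnj (w b) * (Idm D a k * w k))
       + (complex_of_real c)\<^sup>2 * w a * cnj (w b) * (cnj (w k) * w k)" for k
      unfolding R_def by (simp add: algebra_simps power2_eq_square)
    have "mmult D R R a b = (\<Sum>k<D. Idm D a k * Idm D k b) - complex_of_real c * (w a * (\<Sum>k<D. cnj (w k) * Idm D k b))
       - complex_of_real c * (cnj (w b) * (\<Sum>k<D. Idm D a k * w k))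
       + (complex_of_real c)\<^sup>2 * w a * cnj (w b) * (\<Sum>k<D. cnj (w k) * w k)"
      unfolding mmult_def tm by (simp add: sum.distrib sum_subtractf sum_distrib_left)
    also have "\<dots> = Idm D a b - 2 * complex_of_real c * w a * cnj (w b)
       + (complex_of_real c)\<^sup>2 * w a * cnj (w b) * complex_of_real (2 - 2 * t)"
      unfolding nw sum_Idm_l sum_Idm_r using wsupp by (auto simp: Idm_def)
    also have "\<dots> = Idm D a b"
    proof (cases "t = 1")
      case True thus ?thesis unfolding c_def by simp
    next
      case False
      have "1 - t \<noteq> 0" using False by simp
      hence c1: "c * (1 - t) = 1" unfolding c_def using False by simp
      have "c\<^sup>2 * (2 - 2 * t) = 2 * c * (c * (1 - t))" by (simp add: power2_eq_square algebra_simps)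
      hence r: "c\<^sup>2 * (2 - 2 * t) = 2 * c" using c1 by simp
      have E: "(complex_of_real c)\<^sup>2 * complex_of_real (2 - 2 * t) = 2 * complex_of_real c"
        using arg_cong[OF r, of complex_of_real] by simp
      have "(complex_of_real c)\<^sup>2 * w a * cnj (w b) * complex_of_real (2 - 2 * t)
          = ((complex_of_real c)\<^sup>2 * complex_of_real (2 - 2 * t)) * (w a * cnj (w b))"
        by (simp only: mult_ac)
      also have "\<dots> = 2 * complex_of_real c * w a * cnj (w b)" by (simp only: E mult.assoc)
      finally show ?thesis by simp
    qed
    finally show "mmult D R R a b = Idm D a b" .
  qed
  have cwd: "cnj (w d) = cnj s * complex_of_real (t - 1)"
    unfolding w_def using vd by (simp add: algebra_simps)
  have va: "v a = w a + (if a = d then s else 0)" for a unfolding w_def by simp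
  have Rd: "R a d = cnj s * v a" for a
  proof (cases "t = 1")
    case True
    have "w a = 0" using w0[OF True] wsupp by (cases "a < D") auto
    thus ?thesis unfolding R_def va using True cs dD by (simp add: Idm_def c_def)
  next
    case False
    hence c1: "complex_of_real c * complex_of_real (t - 1) = -1"
      unfolding c_def by (simp add: field_simps flip: of_real_mult)
    have "R a d = Idm D a d - (complex_of_real c * complex_of_real (t - 1)) * cnj s * w a"
      unfolding R_def cwd by (simp add: mult_ac)
    also have "\<dots> = Idm D a d + cnj s * w a" unfolding c1 by simp
    also have "\<dots> = cnj s * v a" unfolding va using cs dD wsupp[of a]
      by (cases "a < D") (auto simp: Idm_def algebra_simps)
    finally show ?thesis .
  qed
  show ?thesis using herm RR Rd s1 by blast
qed



definition mv :: "nat \<Rightarrow> cmat \<Rightarrow> (nat \<Rightarrow> complex) \<Rightarrow> nat \<Rightarrow> complex" where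
  "mv d A x = (\<lambda>i. \<Sum>k<d. A i k * x k)"

lemma mmult_assoc: "mmult d (mmult d A B) C = mmult d A (mmult d B C)"
proof (intro ext)
  fix i j
  have "mmult d (mmult d A B) C i j = (\<Sum>l<d. \<Sum>k<d. A i k * B k l * C l j)"
    unfolding mmult_def by (simp add: sum_distrib_right)
  also have "\<dots> = (\<Sum>k<d. \<Sum>l<d. A i k * B k l * C l j)" by (rule sum.swap)
  also have "\<dots> = mmult d A (mmult d B C) i j"
    unfolding mmult_def by (simp add: sum_distrib_left mult.assoc)
  finally show "mmult d (mmult d A B) C i j = mmult d A (mmult d B C) i j" .
qed

lemma mmult_Idm_l: "supported d A \<Longrightarrow> mmult d (Idm d) A = A"
  unfolding mmult_def supported_def by (intro ext) (simp add: sum_Idm_l)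

lemma mmult_Idm_r: "supported d A \<Longrightarrow> mmult d A (Idm d) = A"
  unfolding mmult_def supported_def by (intro ext) (simp add: sum_Idm_r)

lemma mv_mv: "mv d A (mv d B x) = mv d (mmult d A B) x"
proof (intro ext)
  fix i
  have "mv d A (mv d B x) i = (\<Sum>k<d. \<Sum>l<d. A i k * B k l * x l)"
    unfolding mv_def by (simp add: sum_distrib_left mult.assoc)
  also have "\<dots> = (\<Sum>l<d. \<Sum>k<d. A i k * B k l * x l)" by (rule sum.swap)
  also have "\<dots> = mv d (mmult d A B) x i"
    unfolding mv_def mmult_def by (simp add: sum_distrib_right)
  finally show "mv d A (mv d B x) i = mv d (mmult d A B) x i" .
qed

lemma mv_Idm: "i < d \<Longrightarrow> mv d (Idm d) x i = x i"
  unfolding mv_def by (simp add: sum_Idm_l)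

lemma ip_cong: "(\<And>k. k < d \<Longrightarrow> x k = x' k) \<Longrightarrow> (\<And>k. k < d \<Longrightarrow> y k = y' k) \<Longrightarrow> ip d x y = ip d x' y'"
  unfolding ip_def by (rule sum.cong) auto

lemma ip_herm: assumes "\<forall>i j. cnj (R i j) = R j i"
  shows "ip d (mv d R x) y = ip d x (mv d R y)"
proof -
  have "ip d (mv d R x) y = (\<Sum>a<d. \<Sum>k<d. cnj (x k) * (R k a * y a))"
    unfolding ip_def mv_def using assms by (simp add: sum_distrib_right sum_distrib_left ac_simps)
  also have "\<dots> = (\<Sum>k<d. \<Sum>a<d. cnj (x k) * (R k a * y a))"
    by (rule sum.swap)
  also have "\<dots> = ip d x (mv d R y)"
    unfolding ip_def mv_def by (simp add: sum_distrib_left)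
  finally show ?thesis .
qed

lemma ip_conj: "ip d y x = cnj (ip d x y)"
  unfolding ip_def by (simp add: mult.commute)

lemma sandwich:
  assumes A: "\<forall>a b. A a b = (\<Sum>i<m. f i * x i a * cnj (y i b))"
    and R: "\<forall>i j. cnj (R i j) = R j i"
  shows "mmult D (mmult D R A) R a b = (\<Sum>i<m. f i * mv D R (x i) a * cnj (mv D R (y i) b))"
proof -
  have "mmult D (mmult D R A) R a b = (\<Sum>k<D. \<Sum>l<D. R a k * A k l * R l b)"
    unfolding mmult_assoc unfolding mmult_def by (simp add: sum_distrib_left mult.assoc)
  also have "\<dots> = (\<Sum>k<D. \<Sum>l<D. \<Sum>i<m. f i * (R a k * x i k) * (cnj (y i l) * R l b))"
    by (simp add: A sum_distrib_left sum_distrib_right ac_simps)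
  also have "\<dots> = (\<Sum>k<D. \<Sum>i<m. \<Sum>l<D. f i * (R a k * x i k) * (cnj (y i l) * R l b))"
    by (rule sum.cong[OF refl], rule sum.swap)
  also have "\<dots> = (\<Sum>i<m. \<Sum>k<D. \<Sum>l<D. f i * (R a k * x i k) * (cnj (y i l) * R l b))"
    by (rule sum.swap)
  also have "\<dots> = (\<Sum>i<m. f i * mv D R (x i) a * cnj (mv D R (y i) b))"
    unfolding mv_def using R by (simp add: sum_distrib_left sum_distrib_right mult.assoc mult.commute)
  finally show ?thesis .
qed



definition spec_decomp :: "nat \<Rightarrow> cmat \<Rightarrow> (nat \<Rightarrow> nat \<Rightarrow> complex) \<Rightarrow> (nat \<Rightarrow> real) \<Rightarrow> bool" where
  "spec_decomp d M u lam \<longleftrightarrow> (\<forall>i<d. \<forall>k. d \<le> k \<longrightarrow> u i k = 0) \<and>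
     (\<forall>i<d. \<forall>j<d. ip d (u i) (u j) = (if i = j then 1 else 0)) \<and>
     (\<forall>a b. M a b = (\<Sum>i<d. complex_of_real (lam i) * u i a * cnj (u i b)))"

lemma hermit_cnj: "hermit d M \<Longrightarrow> cnj (M i j) = M j i"
  unfolding hermit_def by (metis complex_cnj_cnj)

lemma hermit_zero: "hermit d M \<Longrightarrow> d \<le> i \<or> d \<le> j \<Longrightarrow> M i j = 0"
  unfolding hermit_def supported_def by blast

theorem spectral: "hermit d M \<Longrightarrow> \<exists>u lam. spec_decomp d M u lam"
proof (induction d arbitrary: M)
  case 0
  hence "M a b = 0" for a b unfolding hermit_def supported_def by auto
  thus ?case unfolding spec_decomp_def by auto
next
  case (Suc d M)
  define D where "D = Suc d"
  have hM: "hermit D M" using Suc.prems D_def by simp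
  obtain v e where vsupp: "\<forall>k. D \<le> k \<longrightarrow> v k = 0" and vunit: "ip D v v = 1"
    and veig: "\<forall>i<D. (\<Sum>j<D. M i j * v j) = complex_of_real e * v i"
    using eigvec_exists[OF hM] unfolding D_def ip_def by auto
  define M1 where "M1 = (\<lambda>a b. M a b - complex_of_real e * v a * cnj (v b))"
  have hM1: "hermit D M1" unfolding hermit_def supported_def M1_def
  proof (intro conjI allI impI)
    fix i j assume "D \<le> i \<or> D \<le> j"
    thus "M i j - complex_of_real e * v i * cnj (v j) = 0" using hermit_zero[OF hM] vsupp by auto
  next
    fix i j show "M i j - complex_of_real e * v i * cnj (v j) = cnj (M j i - complex_of_real e * v j * cnj (v i))"
      using hermit_cnj[OF hM, of j i] by simp
  qed
  have M1v: "(\<Sum>l<D. M1 k l * v l) = 0" for k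
  proof (cases "k < D")
    case True
    have "(\<Sum>l<D. M1 k l * v l) = (\<Sum>l<D. M k l * v l) - complex_of_real e * v k * ip D v v"
      unfolding M1_def ip_def by (simp add: algebra_simps sum_subtractf sum_distrib_left)
    thus ?thesis using veig True vunit by simp
  next
    case False thus ?thesis using hermit_zero[OF hM] unfolding M1_def using vsupp by simp
  qed
  obtain R s where hR: "hermit D R" and RR: "mmult D R R = Idm D"
    and Rd: "\<forall>a. R a d = cnj s * v a" and s1: "cmod s = 1"
    using householder[OF vunit vsupp, of d] D_def by auto
  have cs: "cnj s * s = 1" using s1 cnj_mult_self[of s] by simp
  have Rc: "\<forall>i j. cnj (R i j) = R j i" using hermit_cnj[OF hR] by auto
  define M2 where "M2 = mmult D (mmult D R M1) R"
  have M2': "M2 = mmult D R (mmult D M1 R)" unfolding M2_def mmult_assoc ..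
  have hM2D: "\<forall>i j. cnj (M2 i j) = M2 j i"
  proof (intro allI)
    fix i j
    have "cnj (M2 i j) = (\<Sum>k<D. \<Sum>l<D. R j k * M1 k l * R l i)"
      unfolding M2_def mmult_def using Rc hermit_cnj[OF hM1]
      by (simp add: sum_distrib_right sum_distrib_left ac_simps)
    also have "\<dots> = (\<Sum>l<D. \<Sum>k<D. R j k * M1 k l * R l i)" by (rule sum.swap)
    also have "\<dots> = M2 j i" unfolding M2_def mmult_def by (simp add: sum_distrib_right)
    finally show "cnj (M2 i j) = M2 j i" .
  qed
  have M2d: "M2 a d = 0" for a
  proof -
    have "mmult D M1 R k d = cnj s * (\<Sum>l<D. M1 k l * v l)" for k
      unfolding mmult_def using Rd by (simp add: sum_distrib_left ac_simps)
    thus ?thesis unfolding M2' using M1v by (simp add: mmult_def)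
  qed
  have RsuppL: "R a k = 0" if "D \<le> a" for a k using hermit_zero[OF hR] that by auto
  have RsuppR: "R k a = 0" if "D \<le> a" for a k using hermit_zero[OF hR] that by auto
  have hM2: "hermit d M2"
    unfolding hermit_def supported_def
  proof (intro conjI allI impI)
    fix i j assume "d \<le> i \<or> d \<le> j"
    then consider "i = d" | "j = d" | "D \<le> i" | "D \<le> j" unfolding D_def by linarith
    thus "M2 i j = 0"
    proof cases
      case 1 thus ?thesis using M2d[of j] hM2D by (metis complex_cnj_zero)
    next
      case 2 thus ?thesis using M2d by simp
    next
      case 3 thus ?thesis unfolding M2_def mmult_def using RsuppL by simp
    next
      case 4 thus ?thesis unfolding M2_def mmult_def using RsuppR by simp
    qed
  next
    fix i j show "M2 i j = cnj (M2 j i)" using hM2D by (metis complex_cnj_cnj)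
  qed
  obtain u mu where sd: "spec_decomp d M2 u mu" using Suc.IH[OF hM2] by blast
  hence usupp: "\<forall>i<d. \<forall>k. d \<le> k \<longrightarrow> u i k = 0"
    and uon: "\<forall>i<d. \<forall>j<d. ip d (u i) (u j) = (if i = j then 1 else 0)"
    and udec: "\<forall>a b. M2 a b = (\<Sum>i<d. complex_of_real (mu i) * u i a * cnj (u i b))"
    unfolding spec_decomp_def by auto
  define U where "U = (\<lambda>i. if i < d then mv D R (u i) else v)"
  define lam where "lam = (\<lambda>i. if i < d then mu i else e)"
  have M1eq: "M1 = mmult D (mmult D R M2) R"
  proof -
    have sM1: "supported D M1" using hM1 unfolding hermit_def by blast
    have "mmult D (mmult D R M2) R = mmult D (mmult D (mmult D R R) M1) (mmult D R R)"
      unfolding M2_def mmult_assoc ..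
    also have "\<dots> = M1" unfolding RR mmult_Idm_l[OF sM1] mmult_Idm_r[OF sM1] ..
    finally show ?thesis ..
  qed
  have Rv: "mv D R v a = s * Idm D a d" for a
  proof -
    have "v k = s * R k d" for k using Rd cs by (simp add: mult.assoc[symmetric] mult.commute)
    hence "mv D R v a = s * mmult D R R a d" unfolding mv_def mmult_def by (simp add: sum_distrib_left ac_simps)
    thus ?thesis unfolding RR .
  qed
  have ipR: "ip D (mv D R x) (mv D R y) = ip D x y" for x y
  proof -
    have "ip D (mv D R x) (mv D R y) = ip D x (mv D R (mv D R y))" by (rule ip_herm[OF Rc])
    also have "\<dots> = ip D x y" unfolding mv_mv RR by (rule ip_cong) (auto simp: mv_Idm)
    finally show ?thesis .
  qed
  have ipd: "ip D (u i) (u j) = ip d (u i) (u j)" if "i < d" for i j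
    unfolding D_def ip_def using usupp that by simp
  show ?case unfolding spec_decomp_def D_def[symmetric]
  proof (intro exI[of _ U] exI[of _ lam] conjI allI impI)
    fix i k assume "i < D" "D \<le> k"
    thus "U i k = 0" unfolding U_def mv_def using RsuppL vsupp by auto
  next
    fix i j assume i: "i < D" and j: "j < D"
    have ud0: "ip D (U i) v = 0" if "i < d" for i
    proof -
      have "ip D (U i) v = ip D (u i) (mv D R v)"
        unfolding U_def using that by (simp add: ip_herm[OF Rc])
      also have "\<dots> = s * cnj (u i d)" unfolding ext[OF Rv] ip_def
        using sum_Idm_r[where D=D and f="\<lambda>k. cnj (u i k) * s" and b=d] D_def by (simp add: ac_simps)
      also have "\<dots> = 0" using usupp that by simp
      finally show ?thesis .
    qed
    show "ip D (U i) (U j) = (if i = j then 1 else 0)"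
    proof (cases "i < d")
      case True
      show ?thesis
      proof (cases "j < d")
        case True
        thus ?thesis using \<open>i < d\<close> ipR ipd uon unfolding U_def by simp
      next
        case False
        hence "U j = v" unfolding U_def by simp
        thus ?thesis using ud0[OF \<open>i < d\<close>] \<open>i < d\<close> False by simp
      qed
    next
      case False
      hence Ui: "U i = v" unfolding U_def by simp
      show ?thesis
      proof (cases "j < d")
        case True
        thus ?thesis using ud0[OF True] Ui ip_conj[of D v "U j"] False by simp
      next
        case False
        hence "i = j" using \<open>\<not> i < d\<close> i j unfolding D_def by simp
        thus ?thesis using Ui vunit by simp
      qed
    qed
  next
    fix a b
    have "M1 a b = (\<Sum>i<d. complex_of_real (mu i) * mv D R (u i) a * cnj (mv D R (u i) b))"
      unfolding M1eq by (rule sandwich[OF udec Rc])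
    hence "M a b = (\<Sum>i<d. complex_of_real (lam i) * U i a * cnj (U i b))
        + complex_of_real (lam d) * U d a * cnj (U d b)"
      unfolding M1_def U_def lam_def by (simp add: algebra_simps)
    thus "M a b = (\<Sum>i<D. complex_of_real (lam i) * U i a * cnj (U i b))"
      unfolding D_def by simp
  qed
qed



definition dec :: "nat \<Rightarrow> (nat \<Rightarrow> nat \<Rightarrow> complex) \<Rightarrow> (nat \<Rightarrow> real) \<Rightarrow> cmat" where
  "dec d u f = (\<lambda>a b. \<Sum>i<d. complex_of_real (f i) * u i a * cnj (u i b))"

definition orthon :: "nat \<Rightarrow> (nat \<Rightarrow> nat \<Rightarrow> complex) \<Rightarrow> bool" where
  "orthon d u \<longleftrightarrow> (\<forall>i<d. \<forall>j<d. ip d (u i) (u j) = (if i = j then 1 else 0))"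

lemma dec_mult:
  assumes "orthon d u"
  shows "mmult d (dec d u f) (dec d u g) = dec d u (\<lambda>i. f i * g i)"
proof (intro ext)
  fix a b
  have "mmult d (dec d u f) (dec d u g) a b =
     (\<Sum>i<d. \<Sum>j<d. complex_of_real (f i) * complex_of_real (g j) * u i a * cnj (u j b) * ip d (u i) (u j))"
  proof -
    have "mmult d (dec d u f) (dec d u g) a b = (\<Sum>k<d. \<Sum>j<d. \<Sum>i<d.
        complex_of_real (f i) * complex_of_real (g j) * u i a * cnj (u j b) * (cnj (u i k) * u j k))"
      unfolding mmult_def dec_def by (simp add: sum_distrib_left sum_distrib_right ac_simps)
    also have "\<dots> = (\<Sum>k<d. \<Sum>i<d. \<Sum>j<d.
        complex_of_real (f i) * complex_of_real (g j) * u i a * cnj (u j b) * (cnj (u i k) * u j k))"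
      by (rule sum.cong[OF refl], rule sum.swap)
    also have "\<dots> = (\<Sum>i<d. \<Sum>k<d. \<Sum>j<d.
        complex_of_real (f i) * complex_of_real (g j) * u i a * cnj (u j b) * (cnj (u i k) * u j k))"
      by (rule sum.swap)
    also have "\<dots> = (\<Sum>i<d. \<Sum>j<d. \<Sum>k<d.
        complex_of_real (f i) * complex_of_real (g j) * u i a * cnj (u j b) * (cnj (u i k) * u j k))"
      by (rule sum.cong[OF refl], rule sum.swap)
    also have "\<dots> = (\<Sum>i<d. \<Sum>j<d. complex_of_real (f i) * complex_of_real (g j) * u i a * cnj (u j b) * ip d (u i) (u j))"
      unfolding ip_def by (simp add: sum_distrib_left)
    finally show ?thesis .
  qed
  also have "\<dots> = (\<Sum>i<d. \<Sum>j<d. if j = i then complex_of_real (f i) * complex_of_real (g j) * u i a * cnj (u j b) else 0)"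
    using assms unfolding orthon_def by (intro sum.cong refl) auto
  also have "\<dots> = dec d u (\<lambda>i. f i * g i) a b" unfolding dec_def by simp
  finally show "mmult d (dec d u f) (dec d u g) a b = dec d u (\<lambda>i. f i * g i) a b" .
qed

lemma dec_mv_u:
  assumes "orthon d u" "j < d"
  shows "mv d (dec d u f) (u j) a = complex_of_real (f j) * u j a"
proof -
  have "mv d (dec d u f) (u j) a = (\<Sum>k<d. \<Sum>i<d. complex_of_real (f i) * u i a * (cnj (u i k) * u j k))"
    unfolding mv_def dec_def by (simp add: sum_distrib_left sum_distrib_right ac_simps)
  also have "\<dots> = (\<Sum>i<d. \<Sum>k<d. complex_of_real (f i) * u i a * (cnj (u i k) * u j k))"
    by (rule sum.swap)
  also have "\<dots> = (\<Sum>i<d. complex_of_real (f i) * u i a * ip d (u i) (u j))"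
    unfolding ip_def by (simp add: sum_distrib_left)
  also have "\<dots> = (\<Sum>i<d. if i = j then complex_of_real (f i) * u i a else 0)"
    using assms unfolding orthon_def by (intro sum.cong refl) auto
  finally show ?thesis using assms by simp
qed

lemma dec_mv_perp:
  assumes "\<forall>i<d. ip d (u i) w = 0"
  shows "mv d (dec d u f) w a = 0"
proof -
  have "mv d (dec d u f) w a = (\<Sum>k<d. \<Sum>i<d. complex_of_real (f i) * u i a * (cnj (u i k) * w k))"
    unfolding mv_def dec_def by (simp add: sum_distrib_left sum_distrib_right ac_simps)
  also have "\<dots> = (\<Sum>i<d. \<Sum>k<d. complex_of_real (f i) * u i a * (cnj (u i k) * w k))"
    by (rule sum.swap)
  also have "\<dots> = (\<Sum>i<d. complex_of_real (f i) * u i a * ip d (u i) w)"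
    unfolding ip_def by (simp add: sum_distrib_left)
  finally show ?thesis using assms by simp
qed

lemma sum_sq_zero:
  fixes d :: nat
  assumes "(\<Sum>k<d. (cmod (y k))\<^sup>2) \<le> 0" "a < d"
  shows "y a = 0"
proof -
  have "(\<Sum>k<d. (cmod (y k))\<^sup>2) = 0" using assms(1) by (intro antisym sum_nonneg) auto
  hence "\<forall>k\<in>{..<d}. (cmod (y k))\<^sup>2 = 0"
    using sum_nonneg_eq_0_iff[of "{..<d}" "\<lambda>k. (cmod (y k))\<^sup>2"] by simp
  thus ?thesis using assms(2) by simp
qed

lemma psd_herm: "psd d B \<Longrightarrow> cnj (B i j) = B j i"
  unfolding psd_def by (metis complex_cnj_cnj)

lemma psd_eig:
  assumes B: "psd d B" and sg: "\<sigma> \<ge> 0"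
    and ev: "\<forall>a<d. mv d (mmult d B B) x a = complex_of_real (\<sigma>\<^sup>2) * x a"
  shows "\<forall>a<d. mv d B x a = complex_of_real \<sigma> * x a"
proof (cases "\<sigma> = 0")
  case True
  define z where "z = mv d B x"
  have "(\<Sum>a<d. cnj (z a) * z a) = (\<Sum>a<d. \<Sum>k<d. cnj (z a) * B a k * x k)"
    unfolding z_def mv_def by (simp add: sum_distrib_left mult.assoc)
  also have "\<dots> = (\<Sum>k<d. \<Sum>a<d. cnj (z a) * B a k * x k)" by (rule sum.swap)
  also have "\<dots> = (\<Sum>k<d. cnj (mv d B z k) * x k)"
    unfolding mv_def using psd_herm[OF B] by (simp add: sum_distrib_right sum_distrib_left ac_simps)
  also have "\<dots> = 0" unfolding z_def mv_mv using ev True by simp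
  finally have "complex_of_real (\<Sum>a<d. (cmod (z a))\<^sup>2) = 0" unfolding sumsq .
  hence "(\<Sum>a<d. (cmod (z a))\<^sup>2) \<le> 0" by (simp only: of_real_eq_0_iff order_refl)
  hence "\<forall>a<d. z a = 0" using sum_sq_zero by blast
  thus ?thesis using True unfolding z_def by simp
next
  case False
  hence sp: "\<sigma> > 0" using sg by simp
  define y where "y = (\<lambda>a. mv d B x a - complex_of_real \<sigma> * x a)"
  have hy: "mv d B y a = - complex_of_real \<sigma> * y a" if "a < d" for a
  proof -
    have "mv d B y a = mv d B (mv d B x) a - complex_of_real \<sigma> * mv d B x a"
      unfolding y_def mv_def by (simp add: algebra_simps sum_subtractf sum_distrib_left)
    also have "\<dots> = complex_of_real (\<sigma>\<^sup>2) * x a - complex_of_real \<sigma> * mv d B x a"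
      unfolding mv_mv using ev that by simp
    also have "\<dots> = - complex_of_real \<sigma> * y a" unfolding y_def
      by (simp add: algebra_simps power2_eq_square)
    finally show ?thesis .
  qed
  have "(\<Sum>i<d. \<Sum>j<d. cnj (y i) * B i j * y j) = (\<Sum>i<d. cnj (y i) * mv d B y i)"
    unfolding mv_def by (simp add: sum_distrib_left mult.assoc)
  also have "\<dots> = - complex_of_real \<sigma> * (\<Sum>i<d. cnj (y i) * y i)"
    using hy by (simp add: sum_distrib_left ac_simps)
  finally have E: "(\<Sum>i<d. \<Sum>j<d. cnj (y i) * B i j * y j) = - complex_of_real \<sigma> * (\<Sum>i<d. cnj (y i) * y i)" .
  have "0 \<le> Re (\<Sum>i<d. \<Sum>j<d. cnj (y i) * B i j * y j)"
    using B unfolding psd_def by blast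
  hence "0 \<le> Re (- complex_of_real \<sigma> * (\<Sum>i<d. cnj (y i) * y i))" unfolding E .
  hence "\<sigma> * (\<Sum>i<d. (cmod (y i))\<^sup>2) \<le> 0" unfolding sumsq by simp
  hence "(\<Sum>i<d. (cmod (y i))\<^sup>2) \<le> 0" using sp by (simp add: mult_le_0_iff sum_nonneg)
  hence "\<forall>a<d. y a = 0" using sum_sq_zero by blast
  thus ?thesis unfolding y_def by simp
qed



lemma sd_parts:
  assumes "spec_decomp d M u lam"
  shows "orthon d u" "M = dec d u lam" "\<forall>i<d. \<forall>k. d \<le> k \<longrightarrow> u i k = 0"
  using assms unfolding spec_decomp_def orthon_def dec_def by (auto intro!: ext)

lemma dec_zero: "\<forall>i<d. \<forall>k. d \<le> k \<longrightarrow> u i k = 0 \<Longrightarrow> d \<le> a \<or> d \<le> b \<Longrightarrow> dec d u f a b = 0"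
  unfolding dec_def by auto

lemma dec_quad: "(\<Sum>a<d. \<Sum>b<d. cnj (v a) * dec d u f a b * v b)
    = (\<Sum>t<d. complex_of_real (f t) * (cnj (ip d (u t) v) * ip d (u t) v))"
proof -
  have "(\<Sum>a<d. \<Sum>b<d. cnj (v a) * dec d u f a b * v b)
      = (\<Sum>a<d. \<Sum>b<d. \<Sum>t<d. complex_of_real (f t) * (cnj (v a) * u t a) * (cnj (u t b) * v b))"
    unfolding dec_def by (simp add: sum_distrib_left sum_distrib_right ac_simps)
  also have "\<dots> = (\<Sum>a<d. \<Sum>t<d. \<Sum>b<d. complex_of_real (f t) * (cnj (v a) * u t a) * (cnj (u t b) * v b))"
    by (rule sum.cong[OF refl], rule sum.swap)
  also have "\<dots> = (\<Sum>t<d. \<Sum>a<d. \<Sum>b<d. complex_of_real (f t) * (cnj (v a) * u t a) * (cnj (u t b) * v b))"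
    by (rule sum.swap)
  also have "\<dots> = (\<Sum>t<d. complex_of_real (f t) * (cnj (ip d (u t) v) * ip d (u t) v))"
    unfolding ip_def by (simp add: sum_distrib_left sum_distrib_right ac_simps)
  finally show ?thesis .
qed

lemma dec_psd:
  assumes "\<forall>i<d. \<forall>k. d \<le> k \<longrightarrow> u i k = 0" "\<And>i. 0 \<le> f i"
  shows "psd d (dec d u f)"
  unfolding psd_def supported_def
proof (intro conjI allI impI)
  fix i j assume "d \<le> i \<or> d \<le> j" thus "dec d u f i j = 0" using dec_zero[OF assms(1)] by blast
next
  fix i j show "dec d u f i j = cnj (dec d u f j i)" unfolding dec_def by (simp add: ac_simps)
next
  fix v :: "nat \<Rightarrow> complex"
  have "Re (\<Sum>a<d. \<Sum>b<d. cnj (v a) * dec d u f a b * v b) = (\<Sum>t<d. f t * (cmod (ip d (u t) v))\<^sup>2)"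
    unfolding dec_quad cnj_mult_self by simp
  also have "\<dots> \<ge> 0" using assms(2) by (intro sum_nonneg) auto
  finally show "0 \<le> Re (\<Sum>a<d. \<Sum>b<d. cnj (v a) * dec d u f a b * v b)" .
qed

lemma adj_herm: "hermit d M \<Longrightarrow> adj M = M"
  unfolding adj_def by (intro ext) (simp add: hermit_cnj)

lemma sqrt_unique:
  assumes hM: "hermit d M" and sd: "spec_decomp d M u lam"
    and B: "psd d B \<and> (\<forall>i<d. \<forall>j<d. mmult d B B i j = mmult d (adj M) M i j)"
  shows "B = dec d u (\<lambda>i. \<bar>lam i\<bar>)"
proof -
  note on = sd_parts(1)[OF sd] and Mdec = sd_parts(2)[OF sd] and us = sd_parts(3)[OF sd]
  have MM: "mmult d (adj M) M = dec d u (\<lambda>i. lam i * lam i)"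
    unfolding adj_herm[OF hM] by (subst (1 2) Mdec) (rule dec_mult[OF on])
  from B have pB: "psd d B" and BB: "\<And>i j. i < d \<Longrightarrow> j < d \<Longrightarrow> mmult d B B i j = dec d u (\<lambda>i. lam i * lam i) i j"
    unfolding MM by auto
  have mvBB: "mv d (mmult d B B) x a = mv d (dec d u (\<lambda>i. lam i * lam i)) x a" if "a < d" for x a
    unfolding mv_def using BB that by simp
  have Bu: "mv d B (u i) a = complex_of_real \<bar>lam i\<bar> * u i a" if "i < d" "a < d" for i a
  proof -
    have "\<forall>a<d. mv d (mmult d B B) (u i) a = complex_of_real (\<bar>lam i\<bar>\<^sup>2) * u i a"
      using mvBB dec_mv_u[OF on that(1)] by (simp add: power2_eq_square)
    from psd_eig[OF pB abs_ge_zero this] show ?thesis using that by simp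
  qed
  show "B = dec d u (\<lambda>i. \<bar>lam i\<bar>)"
  proof (intro ext)
    fix a b
    show "B a b = dec d u (\<lambda>i. \<bar>lam i\<bar>) a b"
    proof (cases "a < d \<and> b < d")
      case False
      have "B a b = 0" using pB False unfolding psd_def supported_def by (meson not_le)
      thus ?thesis using dec_zero[OF us, of a b] False by (simp add: not_less)
    next
      case True
      define e where "e = (\<lambda>k. if k = b then (1::complex) else 0)"
      define w where "w = (\<lambda>k. e k - (\<Sum>i<d. cnj (u i b) * u i k))"
      have wp: "\<forall>j<d. ip d (u j) w = 0"
      proof (intro allI impI)
        fix j assume j: "j < d"
        have "ip d (u j) w = cnj (u j b) - (\<Sum>i<d. cnj (u i b) * ip d (u j) (u i))"
          unfolding w_def e_def ip_def using True
          by (simp add: algebra_simps sum_subtractf sum_distrib_left if_distrib[of "\<lambda>x. _ * x"] cong: if_cong)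
             (rule sum.swap)
        also have "\<dots> = 0" using on j unfolding orthon_def by (simp add: if_distrib[of "\<lambda>x. _ * x"] cong: if_cong)
        finally show "ip d (u j) w = 0" .
      qed
      have Bw: "mv d B w a = 0"
      proof -
        have "\<forall>a<d. mv d (mmult d B B) w a = complex_of_real (0\<^sup>2) * w a"
          using mvBB dec_mv_perp[OF wp] by simp
        from psd_eig[OF pB order_refl this] show ?thesis using True by simp
      qed
      have "B a b = mv d B e a" unfolding mv_def e_def using True
        by (simp add: if_distrib[of "\<lambda>x. _ * x"] cong: if_cong)
      also have "\<dots> = (\<Sum>i<d. cnj (u i b) * mv d B (u i) a) + mv d B w a"
      proof -
        have "e = (\<lambda>k. (\<Sum>i<d. cnj (u i b) * u i k) + w k)" unfolding w_def by simp
        hence "mv d B e a = (\<Sum>k<d. B a k * ((\<Sum>i<d. cnj (u i b) * u i k) + w k))"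
          unfolding mv_def by simp
        also have "\<dots> = (\<Sum>k<d. \<Sum>i<d. cnj (u i b) * (B a k * u i k)) + mv d B w a"
          unfolding mv_def by (simp add: algebra_simps sum.distrib sum_distrib_left)
        also have "\<dots> = (\<Sum>i<d. \<Sum>k<d. cnj (u i b) * (B a k * u i k)) + mv d B w a"
          by (subst sum.swap) (rule refl)
        also have "\<dots> = (\<Sum>i<d. cnj (u i b) * mv d B (u i) a) + mv d B w a"
          unfolding mv_def by (simp add: sum_distrib_left)
        finally show ?thesis .
      qed
      also have "\<dots> = dec d u (\<lambda>i. \<bar>lam i\<bar>) a b"
        unfolding Bw dec_def using Bu True by (simp add: ac_simps)
      finally show ?thesis .
    qed
  qed
qed

lemma the_sqrt:
  assumes hM: "hermit d M" and sd: "spec_decomp d M u lam"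
  shows "(THE B. psd d B \<and> (\<forall>i<d. \<forall>j<d. mmult d B B i j = mmult d (adj M) M i j))
         = dec d u (\<lambda>i. \<bar>lam i\<bar>)"
proof (rule the_equality)
  note on = sd_parts(1)[OF sd] and Mdec = sd_parts(2)[OF sd] and us = sd_parts(3)[OF sd]
  have MM: "mmult d (adj M) M = dec d u (\<lambda>i. lam i * lam i)"
    unfolding adj_herm[OF hM] by (subst (1 2) Mdec) (rule dec_mult[OF on])
  show "psd d (dec d u (\<lambda>i. \<bar>lam i\<bar>) ) \<and>
      (\<forall>i<d. \<forall>j<d. mmult d (dec d u (\<lambda>i. \<bar>lam i\<bar>)) (dec d u (\<lambda>i. \<bar>lam i\<bar>)) i j = mmult d (adj M) M i j)"
    using dec_psd[OF us] unfolding MM dec_mult[OF on] by (simp add: abs_mult_self_eq)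
  fix B assume "psd d B \<and> (\<forall>i<d. \<forall>j<d. mmult d B B i j = mmult d (adj M) M i j)"
  thus "B = dec d u (\<lambda>i. \<bar>lam i\<bar>)" by (rule sqrt_unique[OF hM sd])
qed



lemma tn_formula:
  assumes hM: "hermit d M"
  shows "\<exists>\<beta>. (\<forall>k. 0 \<le> \<beta> k) \<and> trace_norm d M = (\<Sum>k<d. \<beta> k) \<and>
            (\<forall>x y. cmod (M x y) \<le> (\<beta> x + \<beta> y) / 2)"
proof -
  obtain u lam where sd: "spec_decomp d M u lam" using spectral[OF hM] by blast
  note Mdec = sd_parts(2)[OF sd]
  define \<beta> where "\<beta> = (\<lambda>a. \<Sum>i<d. \<bar>lam i\<bar> * (cmod (u i a))\<^sup>2)"
  have "trace_norm d M = Re (\<Sum>a<d. dec d u (\<lambda>i. \<bar>lam i\<bar>) a a)"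
    unfolding trace_norm_def the_sqrt[OF hM sd] ..
  also have "\<dots> = (\<Sum>a<d. \<beta> a)"
  proof -
    have t: "complex_of_real r * z * cnj z = complex_of_real (r * (cmod z)\<^sup>2)" for r z
    proof -
      have "complex_of_real (r * (cmod z)\<^sup>2) = complex_of_real r * complex_of_real ((cmod z)\<^sup>2)"
        by (rule of_real_mult)
      also have "complex_of_real ((cmod z)\<^sup>2) = z * cnj z" by (rule complex_norm_square)
      finally show ?thesis by (metis mult.assoc)
    qed
    have "dec d u (\<lambda>i. \<bar>lam i\<bar>) a a = complex_of_real (\<beta> a)" for a
      unfolding dec_def \<beta>_def t of_real_sum ..
    thus ?thesis by simp
  qed
  finally have tn: "trace_norm d M = (\<Sum>a<d. \<beta> a)" .
  have bnd: "cmod (M x y) \<le> (\<beta> x + \<beta> y) / 2" for x y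
  proof -
    have "cmod (M x y) \<le> (\<Sum>i<d. cmod (complex_of_real (lam i) * u i x * cnj (u i y)))"
      unfolding Mdec dec_def by (rule norm_sum)
    also have "\<dots> \<le> (\<Sum>i<d. \<bar>lam i\<bar> * (((cmod (u i x))\<^sup>2 + (cmod (u i y))\<^sup>2) / 2))"
    proof (rule sum_mono)
      fix i
      have "cmod (u i x) * cmod (u i y) \<le> ((cmod (u i x))\<^sup>2 + (cmod (u i y))\<^sup>2) / 2"
        using sum_squares_bound[of "cmod (u i x)" "cmod (u i y)"] by (simp add: power2_eq_square)
      thus "cmod (complex_of_real (lam i) * u i x * cnj (u i y)) \<le> \<bar>lam i\<bar> * (((cmod (u i x))\<^sup>2 + (cmod (u i y))\<^sup>2) / 2)"
        by (simp add: norm_mult mult.assoc mult_left_mono)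
    qed
    also have "\<dots> = (\<Sum>i<d. \<bar>lam i\<bar> * (cmod (u i x))\<^sup>2 + \<bar>lam i\<bar> * (cmod (u i y))\<^sup>2) / 2"
      unfolding sum_divide_distrib by (rule sum.cong) (auto simp: algebra_simps)
    also have "\<dots> = (\<beta> x + \<beta> y) / 2" unfolding \<beta>_def sum.distrib ..
    finally show ?thesis .
  qed
  show ?thesis using tn bnd unfolding \<beta>_def by (intro exI[of _ \<beta>]) (auto simp: \<beta>_def intro: sum_nonneg)
qed

lemma tn_nonneg: "hermit d M \<Longrightarrow> 0 \<le> trace_norm d M"
proof -
  assume "hermit d M"
  then obtain \<beta> where "\<forall>k. 0 \<le> \<beta> k" "trace_norm d M = (\<Sum>k<d. \<beta> k)"
    using tn_formula[of d M] by blast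
  thus ?thesis by (simp add: sum_nonneg)
qed

lemma sum_pairs: "(\<Sum>k<2*h. g k) = (\<Sum>c<h. g (2*c) + g (2*c+1))" for h :: nat
  by (induction h) (simp_all add: ac_simps)

lemma tn_pair:
  assumes hM: "hermit (2*h) M" and "a < 2" "b < 2"
  shows "cmod (\<Sum>c<h. M (2*c+a) (2*c+b)) \<le> trace_norm (2*h) M"
proof -
  obtain \<beta> where b0: "\<forall>k. 0 \<le> \<beta> k" and tn: "trace_norm (2*h) M = (\<Sum>k<2*h. \<beta> k)"
    and bnd: "\<forall>x y. cmod (M x y) \<le> (\<beta> x + \<beta> y) / 2" using tn_formula[OF hM] by blast
  have le: "\<beta> (2*c+a) \<le> \<beta> (2*c) + \<beta> (2*c+1)" if "a < 2" for a c
    using b0 that by (cases a) (auto simp: add_increasing2 add_increasing)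
  have "cmod (\<Sum>c<h. M (2*c+a) (2*c+b)) \<le> (\<Sum>c<h. cmod (M (2*c+a) (2*c+b)))" by (rule norm_sum)
  also have "\<dots> \<le> (\<Sum>c<h. (\<beta> (2*c+a) + \<beta> (2*c+b)) / 2)" using bnd by (intro sum_mono) auto
  also have "\<dots> \<le> (\<Sum>c<h. \<beta> (2*c) + \<beta> (2*c+1))"
  proof (rule sum_mono)
    fix c show "(\<beta> (2*c+a) + \<beta> (2*c+b)) / 2 \<le> \<beta> (2*c) + \<beta> (2*c+1)"
      using le[OF assms(2), of c] le[OF assms(3), of c] by (simp add: field_simps)
  qed
  also have "\<dots> = trace_norm (2*h) M" unfolding tn sum_pairs ..
  finally show ?thesis .
qed

lemma tn_zero: "trace_norm d (\<lambda>i j. 0) = 0"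
proof -
  have h0: "hermit d (\<lambda>i j. 0)" unfolding hermit_def supported_def by simp
  obtain u lam where sd: "spec_decomp d (\<lambda>i j. 0) u lam" using spectral[OF h0] by blast
  have p0: "psd d (\<lambda>i j. 0) \<and> (\<forall>i<d. \<forall>j<d. mmult d (\<lambda>i j. 0) (\<lambda>i j. 0) i j = mmult d (adj (\<lambda>i j. 0)) (\<lambda>i j. 0) i j)"
    unfolding psd_def supported_def mmult_def adj_def by simp
  have "(\<lambda>i j. 0) = dec d u (\<lambda>i. \<bar>lam i\<bar>)" by (rule sqrt_unique[OF h0 sd p0])
  hence "(THE B. psd d B \<and> (\<forall>i<d. \<forall>j<d. mmult d B B i j = mmult d (adj (\<lambda>i j. 0)) (\<lambda>i j. 0) i j)) = (\<lambda>i j. 0)"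
    using the_sqrt[OF h0 sd] by simp
  thus ?thesis unfolding trace_norm_def by simp
qed



definition inner :: "nat \<Rightarrow> (nat \<Rightarrow> nat) \<Rightarrow> (nat \<Rightarrow> bool) \<Rightarrow> (nat \<Rightarrow> complex) \<Rightarrow> cmat \<Rightarrow> nat \<Rightarrow> nat \<Rightarrow> complex" where
  "inner N S P ph X i j = (\<Sum>k<N. \<Sum>l<N. if S k = i \<and> S l = j \<and> P k \<and> P l then ph k * X k l * cnj (ph l) else 0)"

definition Tdiag :: "nat \<Rightarrow> (nat \<Rightarrow> nat) \<Rightarrow> (nat \<Rightarrow> bool) \<Rightarrow> cmat \<Rightarrow> nat \<Rightarrow> real" where
  "Tdiag N S P X i = (\<Sum>k<N. if S k = i \<and> P k then Re (X k k) else 0)"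

lemma inner_diag:
  assumes inj: "inj_on S {..<N}" and ph: "\<forall>k. cmod (ph k) = 1"
  shows "Re (inner N S P ph X i i) = Tdiag N S P X i"
proof -
  have "(\<Sum>l<N. if S k = i \<and> S l = i \<and> P k \<and> P l then ph k * X k l * cnj (ph l) else 0)
      = (if S k = i \<and> P k then X k k else 0)" if k: "k < N" for k
  proof (cases "S k = i \<and> P k")
    case True
    have "(\<Sum>l<N. if S k = i \<and> S l = i \<and> P k \<and> P l then ph k * X k l * cnj (ph l) else 0)
        = (\<Sum>l<N. if l = k then ph k * X k l * cnj (ph l) else 0)"
    proof (rule sum.cong[OF refl])
      fix l assume "l \<in> {..<N}"
      hence "S l = i \<longleftrightarrow> l = k" using inj True k unfolding inj_on_def by auto
      thus "(if S k = i \<and> S l = i \<and> P k \<and> P l then ph k * X k l * cnj (ph l) else 0)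
          = (if l = k then ph k * X k l * cnj (ph l) else 0)" using True by auto
    qed
    also have "\<dots> = ph k * X k k * cnj (ph k)" using k by simp
    also have "\<dots> = X k k" using ph cnj_mult_self[of "ph k"] by (simp add: ac_simps)
    finally show ?thesis using True by simp
  qed auto
  hence "inner N S P ph X i i = (\<Sum>k<N. if S k = i \<and> P k then X k k else 0)"
    unfolding inner_def by (intro sum.cong) auto
  thus ?thesis unfolding Tdiag_def by (simp add: Re_sum if_distrib cong: if_cong)
qed

lemma card_le1_sum:
  fixes N :: nat
  assumes inj: "inj_on S {..<N}" and c: "0 \<le> c"
  shows "(\<Sum>l<N. if S l = j \<and> Q l then c else (0::real)) \<le> c"
proof -
  have "(\<Sum>l<N. if S l = j \<and> Q l then c else (0::real)) = (\<Sum>l\<in>{l\<in>{..<N}. S l = j \<and> Q l}. c)"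
    by (rule sum.inter_filter[symmetric]) simp
  also have "\<dots> = c * card {l\<in>{..<N}. S l = j \<and> Q l}" by simp
  also have "card {l\<in>{..<N}. S l = j \<and> Q l} \<le> 1"
  proof -
    have "\<forall>x\<in>{l\<in>{..<N}. S l = j \<and> Q l}. \<forall>y\<in>{l\<in>{..<N}. S l = j \<and> Q l}. x = y"
      using inj unfolding inj_on_def by auto
    hence "card {l\<in>{..<N}. S l = j \<and> Q l} \<le> Suc 0" by (subst card_le_Suc0_iff_eq) auto
    thus ?thesis by simp
  qed
  hence "c * card {l\<in>{..<N}. S l = j \<and> Q l} \<le> c * 1" using c by (intro mult_left_mono) auto
  finally show ?thesis by simp
qed

lemma inner_off:
  assumes inj: "inj_on S {..<N}" and ph: "\<forall>k. cmod (ph k) = 1" and ij: "i \<noteq> j"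
    and u: "0 \<le> u" and w: "0 \<le> w" and X1: "\<forall>k. 0 \<le> Re (X k k)"
    and X2: "\<forall>k l. k \<noteq> l \<longrightarrow> cmod (X k l) \<le> u * Re (X k k) + w * Re (X l l)"
  shows "cmod (inner N S P ph X i j) \<le> u * Tdiag N S P X i + w * Tdiag N S P X j"
proof -
  define A where "A = (\<lambda>k. S k = i \<and> P k)"
  define B where "B = (\<lambda>l. S l = j \<and> P l)"
  define xa where "xa = (\<lambda>k. if A k then Re (X k k) else 0)"
  define xb where "xb = (\<lambda>k. if B k then Re (X k k) else 0)"
  define ia where "ia = (\<lambda>k. if A k then 1 else (0::real))"
  define ib where "ib = (\<lambda>k. if B k then 1 else (0::real))"
  have "cmod (inner N S P ph X i j) \<le> (\<Sum>k<N. \<Sum>l<N. if A k \<and> B l then u * Re (X k k) + w * Re (X l l) else 0)"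
    unfolding inner_def
  proof (rule order_trans[OF norm_sum sum_mono])
    fix k assume "k \<in> {..<N}"
    show "cmod (\<Sum>l<N. if S k = i \<and> S l = j \<and> P k \<and> P l then ph k * X k l * cnj (ph l) else 0)
        \<le> (\<Sum>l<N. if A k \<and> B l then u * Re (X k k) + w * Re (X l l) else 0)"
    proof (rule order_trans[OF norm_sum sum_mono])
      fix l assume "l \<in> {..<N}"
      show "cmod (if S k = i \<and> S l = j \<and> P k \<and> P l then ph k * X k l * cnj (ph l) else 0)
          \<le> (if A k \<and> B l then u * Re (X k k) + w * Re (X l l) else 0)"
      proof (cases "A k \<and> B l")
        case True
        hence "k \<noteq> l" using ij unfolding A_def B_def by auto
        hence "cmod (X k l) \<le> u * Re (X k k) + w * Re (X l l)" using X2 by auto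
        thus ?thesis using True ph unfolding A_def B_def by (simp add: norm_mult)
      qed (auto simp: A_def B_def)
    qed
  qed
  also have "\<dots> = u * ((\<Sum>k<N. xa k) * (\<Sum>l<N. ib l)) + w * ((\<Sum>l<N. xb l) * (\<Sum>k<N. ia k))"
  proof -
    have "(\<Sum>k<N. \<Sum>l<N. if A k \<and> B l then u * Re (X k k) + w * Re (X l l) else 0)
       = (\<Sum>k<N. \<Sum>l<N. u * (xa k * ib l) + w * (xb l * ia k))"
      unfolding xa_def xb_def ia_def ib_def by (intro sum.cong refl) auto
    also have "\<dots> = u * (\<Sum>k<N. \<Sum>l<N. xa k * ib l) + w * (\<Sum>k<N. \<Sum>l<N. xb l * ia k)"
      by (simp add: sum.distrib sum_distrib_left)
    also have "(\<Sum>k<N. \<Sum>l<N. xb l * ia k) = (\<Sum>l<N. \<Sum>k<N. xb l * ia k)" by (rule sum.swap)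
    finally show ?thesis by (simp only: sum_product)
  qed
  also have "\<dots> \<le> u * ((\<Sum>k<N. xa k) * 1) + w * ((\<Sum>l<N. xb l) * 1)"
  proof -
    have s1: "(\<Sum>l<N. ib l) \<le> 1" using card_le1_sum[OF inj, of 1 j P] unfolding ib_def B_def by simp
    have s2: "(\<Sum>k<N. ia k) \<le> 1" using card_le1_sum[OF inj, of 1 i P] unfolding ia_def A_def by simp
    have n1: "0 \<le> (\<Sum>k<N. xa k)" unfolding xa_def using X1 by (intro sum_nonneg) auto
    have n2: "0 \<le> (\<Sum>k<N. xb k)" unfolding xb_def using X1 by (intro sum_nonneg) auto
    have "(\<Sum>k<N. xa k) * (\<Sum>l<N. ib l) \<le> (\<Sum>k<N. xa k) * 1" by (rule mult_left_mono[OF s1 n1])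
    hence a: "u * ((\<Sum>k<N. xa k) * (\<Sum>l<N. ib l)) \<le> u * ((\<Sum>k<N. xa k) * 1)" by (rule mult_left_mono[OF _ u])
    have "(\<Sum>l<N. xb l) * (\<Sum>k<N. ia k) \<le> (\<Sum>l<N. xb l) * 1" by (rule mult_left_mono[OF s2 n2])
    hence b: "w * ((\<Sum>l<N. xb l) * (\<Sum>k<N. ia k)) \<le> w * ((\<Sum>l<N. xb l) * 1)" by (rule mult_left_mono[OF _ w])
    show ?thesis by (rule add_mono[OF a b])
  qed
  also have "\<dots> = u * Tdiag N S P X i + w * Tdiag N S P X j"
    unfolding Tdiag_def xa_def xb_def A_def B_def by simp
  finally show ?thesis .
qed



lemma pio_inner: "pio_apply N K p blk \<sigma> \<phi> X i j =
   (\<Sum>\<alpha><K. complex_of_real (p \<alpha>) * (\<Sum>\<beta>\<in>blk \<alpha> ` {..<N}. inner N (\<sigma> \<alpha> \<beta>) (\<lambda>k. blk \<alpha> k = \<beta>) (\<phi> \<alpha> \<beta>) X i j))"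
  unfolding pio_apply_def inner_def ..

lemma inner_herm:
  assumes "\<forall>k l. X k l = cnj (X l k)"
  shows "inner N S P ph X i j = cnj (inner N S P ph X j i)"
proof -
  have "cnj (inner N S P ph X j i) = (\<Sum>k<N. \<Sum>l<N. if S l = i \<and> S k = j \<and> P l \<and> P k then ph l * X l k * cnj (ph k) else 0)"
  proof -
    have hc: "cnj (X k l) = X l k" for k l
    proof -
      have "X l k = cnj (X k l)" using assms by blast
      thus ?thesis by simp
    qed
    show ?thesis unfolding inner_def cnj_sum
      by (intro sum.cong refl) (auto simp: hc ac_simps)
  qed
  also have "\<dots> = (\<Sum>l<N. \<Sum>k<N. if S l = i \<and> S k = j \<and> P l \<and> P k then ph l * X l k * cnj (ph k) else 0)"
    by (rule sum.swap)
  also have "\<dots> = inner N S P ph X i j" unfolding inner_def ..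
  finally show ?thesis ..
qed

lemma pio_herm:
  assumes "\<forall>k l. X k l = cnj (X l k)"
  shows "pio_apply N K p blk \<sigma> \<phi> X i j = cnj (pio_apply N K p blk \<sigma> \<phi> X j i)"
  unfolding pio_inner cnj_sum complex_cnj_mult complex_cnj_complex_of_real
  by (intro sum.cong refl arg_cong2[where f="(*)"]) (rule inner_herm[OF assms])

lemma pio_bound:
  assumes p: "\<forall>\<alpha><K. 0 \<le> p \<alpha>" and sg: "\<forall>\<alpha> \<beta>. \<sigma> \<alpha> \<beta> permutes {..<N}"
    and ph: "\<forall>\<alpha> \<beta> k. cmod (\<phi> \<alpha> \<beta> k) = 1" and ij: "i \<noteq> j"
    and u: "0 \<le> u" and w: "0 \<le> w" and X1: "\<forall>k. 0 \<le> Re (X k k)"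
    and X2: "\<forall>k l. k \<noteq> l \<longrightarrow> cmod (X k l) \<le> u * Re (X k k) + w * Re (X l l)"
  shows "cmod (pio_apply N K p blk \<sigma> \<phi> X i j) \<le> u * Re (pio_apply N K p blk \<sigma> \<phi> X i i) + w * Re (pio_apply N K p blk \<sigma> \<phi> X j j)"
proof -
  define T where "T = (\<lambda>\<alpha> \<beta> i. Tdiag N (\<sigma> \<alpha> \<beta>) (\<lambda>k. blk \<alpha> k = \<beta>) X i)"
  have inj: "inj_on (\<sigma> \<alpha> \<beta>) {..<N}" for \<alpha> \<beta> using sg permutes_inj_on by blast
  have ph': "\<forall>k. cmod (\<phi> \<alpha> \<beta> k) = 1" for \<alpha> \<beta> using ph by blast
  have diag: "Re (pio_apply N K p blk \<sigma> \<phi> X i i) = (\<Sum>\<alpha><K. p \<alpha> * (\<Sum>\<beta>\<in>blk \<alpha> ` {..<N}. T \<alpha> \<beta> i))" for i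
    unfolding pio_inner T_def Re_sum by (simp add: Re_sum inner_diag[OF inj ph'])
  have "cmod (pio_apply N K p blk \<sigma> \<phi> X i j) \<le> (\<Sum>\<alpha><K. p \<alpha> * (\<Sum>\<beta>\<in>blk \<alpha> ` {..<N}. u * T \<alpha> \<beta> i + w * T \<alpha> \<beta> j))"
    unfolding pio_inner
  proof (rule order_trans[OF norm_sum sum_mono])
    fix \<alpha> assume a: "\<alpha> \<in> {..<K}"
    have "cmod (\<Sum>\<beta>\<in>blk \<alpha> ` {..<N}. inner N (\<sigma> \<alpha> \<beta>) (\<lambda>k. blk \<alpha> k = \<beta>) (\<phi> \<alpha> \<beta>) X i j)
        \<le> (\<Sum>\<beta>\<in>blk \<alpha> ` {..<N}. u * T \<alpha> \<beta> i + w * T \<alpha> \<beta> j)"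
      unfolding T_def by (rule order_trans[OF norm_sum sum_mono]) (rule inner_off[OF inj ph' ij u w X1 X2])
    thus "cmod (complex_of_real (p \<alpha>) * (\<Sum>\<beta>\<in>blk \<alpha> ` {..<N}. inner N (\<sigma> \<alpha> \<beta>) (\<lambda>k. blk \<alpha> k = \<beta>) (\<phi> \<alpha> \<beta>) X i j))
        \<le> p \<alpha> * (\<Sum>\<beta>\<in>blk \<alpha> ` {..<N}. u * T \<alpha> \<beta> i + w * T \<alpha> \<beta> j)"
      using p a by (simp add: norm_mult mult_left_mono)
  qed
  also have "\<dots> = u * (\<Sum>\<alpha><K. p \<alpha> * (\<Sum>\<beta>\<in>blk \<alpha> ` {..<N}. T \<alpha> \<beta> i)) + w * (\<Sum>\<alpha><K. p \<alpha> * (\<Sum>\<beta>\<in>blk \<alpha> ` {..<N}. T \<alpha> \<beta> j))"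
  proof -
    have "(\<Sum>\<alpha><K. p \<alpha> * (\<Sum>\<beta>\<in>blk \<alpha> ` {..<N}. u * T \<alpha> \<beta> i + w * T \<alpha> \<beta> j))
      = (\<Sum>\<alpha><K. u * (p \<alpha> * (\<Sum>\<beta>\<in>blk \<alpha> ` {..<N}. T \<alpha> \<beta> i)) + w * (p \<alpha> * (\<Sum>\<beta>\<in>blk \<alpha> ` {..<N}. T \<alpha> \<beta> j)))"
      by (rule sum.cong[OF refl]) (simp add: sum.distrib sum_distrib_left algebra_simps)
    thus ?thesis by (simp only: sum.distrib sum_distrib_left)
  qed
  finally show ?thesis unfolding diag .
qed

lemma PIO_out:
  assumes P: "PIO din dout \<Lambda>" and sX: "supported din X"
    and hX: "\<forall>k l. X k l = cnj (X l k)"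
    and u: "0 \<le> u" and w: "0 \<le> w" and X1: "\<forall>k. 0 \<le> Re (X k k)"
    and X2: "\<forall>k l. k \<noteq> l \<longrightarrow> cmod (X k l) \<le> u * Re (X k k) + w * Re (X l l)"
  shows "hermit dout (\<Lambda> X) \<and> (\<forall>i j. i \<noteq> j \<longrightarrow> cmod (\<Lambda> X i j) \<le> u * Re (\<Lambda> X i i) + w * Re (\<Lambda> X j j))"
proof -
  obtain N K p blk \<sigma> \<phi> where p: "\<forall>\<alpha><K. 0 \<le> p \<alpha>" and sg: "\<forall>\<alpha> \<beta>. \<sigma> \<alpha> \<beta> permutes {..<N}"
    and ph: "\<forall>\<alpha> \<beta> k. cmod (\<phi> \<alpha> \<beta> k) = 1"
    and supp: "supported dout (pio_apply N K p blk \<sigma> \<phi> X)"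
    and eq: "\<Lambda> X = pio_apply N K p blk \<sigma> \<phi> X"
    using P sX unfolding PIO_def by blast
  show ?thesis unfolding eq hermit_def
  proof (intro conjI allI impI)
    show "supported dout (pio_apply N K p blk \<sigma> \<phi> X)" by (fact supp)
    fix i j
    show "pio_apply N K p blk \<sigma> \<phi> X i j = cnj (pio_apply N K p blk \<sigma> \<phi> X j i)"
      by (rule pio_herm[OF hX])
    assume "i \<noteq> j"
    thus "cmod (pio_apply N K p blk \<sigma> \<phi> X i j) \<le> u * Re (pio_apply N K p blk \<sigma> \<phi> X i i) + w * Re (pio_apply N K p blk \<sigma> \<phi> X j j)"
      by (rule pio_bound[OF p sg ph _ u w X1 X2])
  qed
qed



lemma tpow_Suc: "tpow A (Suc n) i j = tpow A n (i div 2) (j div 2) * A (i mod 2) (j mod 2)"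
  by (simp add: tensor_def)

lemma tpow_supp: "supported (2^n) (tpow A n)"
proof (induction n)
  case 0 thus ?case by (simp add: supported_def one_dim_def)
next
  case (Suc n)
  show ?case unfolding supported_def tpow_Suc
  proof (intro allI impI)
    fix i j :: nat assume "2 ^ Suc n \<le> i \<or> 2 ^ Suc n \<le> j"
    hence "2^n \<le> i div 2 \<or> 2^n \<le> j div 2" by auto
    thus "tpow A n (i div 2) (j div 2) * A (i mod 2) (j mod 2) = 0"
      using Suc.IH unfolding supported_def by auto
  qed
qed

lemma tpow_herm:
  assumes "\<forall>a b. A a b = cnj (A b a)"
  shows "tpow A n i j = cnj (tpow A n j i)"
proof (induction n arbitrary: i j)
  case 0 thus ?case by (simp add: one_dim_def)
next
  case (Suc n)
  have h1: "tpow A n (i div 2) (j div 2) = cnj (tpow A n (j div 2) (i div 2))" by (rule Suc.IH)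
  have h2: "A (i mod 2) (j mod 2) = cnj (A (j mod 2) (i mod 2))" using assms by blast
  show ?case unfolding tpow_Suc complex_cnj_mult by (rule arg_cong2[where f="(*)", OF h1 h2])
qed

lemma tpow_trace:
  assumes "A 0 0 + A 1 1 = 1"
  shows "(\<Sum>k<2^n. tpow A n k k) = 1"
proof (induction n)
  case 0 thus ?case by (simp add: one_dim_def)
next
  case (Suc n)
  have "(\<Sum>k<2^Suc n. tpow A (Suc n) k k) = (\<Sum>c<2^n. tpow A (Suc n) (2*c) (2*c) + tpow A (Suc n) (2*c+1) (2*c+1))"
    using sum_pairs[of "\<lambda>k. tpow A (Suc n) k k" "2^n"] by simp
  also have "\<dots> = (\<Sum>c<2^n. tpow A n c c * (A 0 0 + A 1 1))"
  proof (intro sum.cong refl)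
    fix c :: nat
    have e: "(2*c) div 2 = c" "(2*c) mod 2 = 0" "(2*c+1) div 2 = c" "(2*c+1) mod 2 = 1" by auto
    show "tpow A (Suc n) (2*c) (2*c) + tpow A (Suc n) (2*c+1) (2*c+1) = tpow A n c c * (A 0 0 + A 1 1)"
      unfolding tpow_Suc e by (simp add: algebra_simps)
  qed
  also have "\<dots> = 1" using Suc.IH assms by (simp flip: sum_distrib_right)
  finally show ?case .
qed

lemma tpow_marg:
  assumes "A 0 0 + A 1 1 = 1" "a < 2" "b < 2"
  shows "(\<Sum>c<2^n. tpow A (Suc n) (2*c+a) (2*c+b)) = A a b"
proof -
  have "(\<Sum>c<2^n. tpow A (Suc n) (2*c+a) (2*c+b)) = (\<Sum>c<2^n. tpow A n c c) * A a b"
    unfolding tpow_Suc sum_distrib_right using assms(2,3) by (intro sum.cong refl) auto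
  thus ?thesis using tpow_trace[of A n, OF assms(1)] by simp
qed

lemma tpow_inv:
  assumes s0: "0 \<le> s" and s1: "s \<le> 1"
    and Ad: "\<forall>a. 0 \<le> Re (A a a)" and Adr: "\<forall>a. A a a = complex_of_real (Re (A a a))"
    and Ab: "\<forall>a b. cmod (A a b) \<le> (if a = b then 1 else s) * sqrt (Re (A a a) * Re (A b b))"
  shows "(\<forall>k. 0 \<le> Re (tpow A n k k) \<and> tpow A n k k = complex_of_real (Re (tpow A n k k))) \<and>
    (\<forall>k l. cmod (tpow A n k l) \<le> (if k = l then 1 else s) * sqrt (Re (tpow A n k k) * Re (tpow A n l l)))"
proof (induction n)
  case 0 thus ?case by (auto simp: one_dim_def)
next
  case (Suc n)
  have IH1: "\<forall>k. 0 \<le> Re (tpow A n k k)" and IH2: "\<forall>k. tpow A n k k = complex_of_real (Re (tpow A n k k))"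
    and IH3: "\<forall>k l. cmod (tpow A n k l) \<le> (if k = l then 1 else s) * sqrt (Re (tpow A n k k) * Re (tpow A n l l))"
    using Suc.IH by blast+
  have dg: "tpow A (Suc n) k k = complex_of_real (Re (tpow A n (k div 2) (k div 2)) * Re (A (k mod 2) (k mod 2)))" for k
  proof -
    have a1: "tpow A n (k div 2) (k div 2) = complex_of_real (Re (tpow A n (k div 2) (k div 2)))" using IH2 by blast
    have a2: "A (k mod 2) (k mod 2) = complex_of_real (Re (A (k mod 2) (k mod 2)))" using Adr by blast
    show ?thesis unfolding tpow_Suc of_real_mult by (rule arg_cong2[where f="(*)", OF a1 a2])
  qed
  have Re_dg: "Re (tpow A (Suc n) k k) = Re (tpow A n (k div 2) (k div 2)) * Re (A (k mod 2) (k mod 2))" for k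
    unfolding dg by (simp only: Re_complex_of_real)
  have nn: "0 \<le> Re (tpow A (Suc n) k k)" for k unfolding Re_dg using IH1 Ad by (simp add: mult_nonneg_nonneg)
  show ?case
  proof (intro conjI allI)
    fix k
    show "0 \<le> Re (tpow A (Suc n) k k)" unfolding Re_dg using IH1 Ad by (simp add: mult_nonneg_nonneg)
    show "tpow A (Suc n) k k = complex_of_real (Re (tpow A (Suc n) k k))" unfolding Re_dg by (rule dg)
  next
    fix k l :: nat
    define c1 :: real where "c1 = (if k div 2 = l div 2 then 1 else s)"
    define c2 :: real where "c2 = (if k mod 2 = l mod 2 then 1 else s)"
    have "cmod (tpow A (Suc n) k l) = cmod (tpow A n (k div 2) (l div 2)) * cmod (A (k mod 2) (l mod 2))"
      unfolding tpow_Suc by (simp add: norm_mult)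
    also have "\<dots> \<le> (c1 * sqrt (Re (tpow A n (k div 2) (k div 2)) * Re (tpow A n (l div 2) (l div 2))))
        * (c2 * sqrt (Re (A (k mod 2) (k mod 2)) * Re (A (l mod 2) (l mod 2))))"
      unfolding c1_def c2_def using IH1 IH3 Ab Ad s0 by (intro mult_mono) auto
    also have "\<dots> = (c1 * c2) * sqrt (Re (tpow A (Suc n) k k) * Re (tpow A (Suc n) l l))"
      unfolding Re_dg by (simp add: real_sqrt_mult ac_simps)
    also have "\<dots> \<le> (if k = l then 1 else s) * sqrt (Re (tpow A (Suc n) k k) * Re (tpow A (Suc n) l l))"
    proof (rule mult_right_mono)
      show "c1 * c2 \<le> (if k = l then 1 else s)"
      proof (cases "k = l")
        case True thus ?thesis unfolding c1_def c2_def by simp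
      next
        case False
        have "k = 2 * (k div 2) + k mod 2" "l = 2 * (l div 2) + l mod 2" by simp_all
        hence "k div 2 \<noteq> l div 2 \<or> k mod 2 \<noteq> l mod 2" using False by metis
        moreover have "s * s \<le> s" using s0 s1 by (simp add: mult_left_le)
        ultimately show ?thesis unfolding c1_def c2_def using False s0 s1 by auto
      qed
    qed (rule real_sqrt_ge_zero, rule mult_nonneg_nonneg[OF nn nn])
    finally show "cmod (tpow A (Suc n) k l) \<le> (if k = l then 1 else s) * sqrt (Re (tpow A (Suc n) k k) * Re (tpow A (Suc n) l l))" .
  qed
qed



lemma marg_bound:
  fixes Y :: cmat and h :: nat
  assumes "\<forall>i j. i \<noteq> j \<longrightarrow> cmod (Y i j) \<le> u * Re (Y i i) + w * Re (Y j j)"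
  shows "cmod (\<Sum>c<h. Y (2*c) (2*c+1)) \<le> u * Re (\<Sum>c<h. Y (2*c) (2*c)) + w * Re (\<Sum>c<h. Y (2*c+1) (2*c+1))"
proof -
  have "cmod (\<Sum>c<h. Y (2*c) (2*c+1)) \<le> (\<Sum>c<h. u * Re (Y (2*c) (2*c)) + w * Re (Y (2*c+1) (2*c+1)))"
    using assms by (intro order_trans[OF norm_sum sum_mono]) auto
  also have "\<dots> = u * Re (\<Sum>c<h. Y (2*c) (2*c)) + w * Re (\<Sum>c<h. Y (2*c+1) (2*c+1))"
    by (simp add: Re_sum sum.distrib sum_distrib_left)
  finally show ?thesis .
qed

lemma Psi_supp: "supported D (Psi D)" unfolding supported_def Psi_def by auto

lemma Psi_herm: "Psi D i j = cnj (Psi D j i)" unfolding Psi_def by auto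

lemma Psi_X1: "0 \<le> Re (Psi D k k)" unfolding Psi_def by auto

lemma Psi_X2: "cmod (Psi D k l) \<le> 1 * Re (Psi D k k) + 0 * Re (Psi D l l)"
    "cmod (Psi D k l) \<le> 0 * Re (Psi D k k) + 1 * Re (Psi D l l)"
  unfolding Psi_def by (auto simp: norm_divide)

lemma Psi_marg:
  assumes "a < 2" "b < 2"
  shows "(\<Sum>c<2^m. Psi (2^Suc m) (2*c+a) (2*c+b)) = 1/2"
proof -
  have "(\<Sum>c<2^m. Psi (2^Suc m) (2*c+a) (2*c+b)) = (\<Sum>c<(2::nat)^m. complex_of_real (1 / 2^Suc m))"
    unfolding Psi_def using assms by (intro sum.cong refl) auto
  also have "\<dots> = 1/2" by simp
  finally show ?thesis .
qed

definition sig0 :: "nat \<Rightarrow> nat \<Rightarrow> nat \<Rightarrow> nat \<Rightarrow> nat \<Rightarrow> nat" where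
  "sig0 N dout \<alpha> \<beta> = (if \<beta> < N then Transposition.transpose \<beta> (\<beta> mod dout) else id)"

lemma pio0_formula:
  assumes "0 < dout"
  shows "pio_apply N 1 (\<lambda>_. 1) (\<lambda>_ k. k) (sig0 N dout) (\<lambda>_ _ _. 1) X i j
     = (\<Sum>\<beta><N. if \<beta> mod dout = i \<and> \<beta> mod dout = j then X \<beta> \<beta> else 0)"
proof -
  have "inner N (sig0 N dout 0 \<beta>) (\<lambda>k. k = \<beta>) (\<lambda>_. 1) X i j = (if \<beta> mod dout = i \<and> \<beta> mod dout = j then X \<beta> \<beta> else 0)"
    if "\<beta> < N" for \<beta>
  proof -
    have e: "(if sig0 N dout 0 \<beta> k = i \<and> sig0 N dout 0 \<beta> l = j \<and> k = \<beta> \<and> l = \<beta> then 1 * X k l * cnj 1 else 0)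
       = (if k = \<beta> then (if l = \<beta> then (if sig0 N dout 0 \<beta> \<beta> = i \<and> sig0 N dout 0 \<beta> \<beta> = j then X \<beta> \<beta> else 0) else 0) else 0)" for k l
      by auto
    have "inner N (sig0 N dout 0 \<beta>) (\<lambda>k. k = \<beta>) (\<lambda>_. 1) X i j
       = (\<Sum>k<N. if k = \<beta> then (\<Sum>l<N. if l = \<beta> then (if sig0 N dout 0 \<beta> \<beta> = i \<and> sig0 N dout 0 \<beta> \<beta> = j then X \<beta> \<beta> else 0) else 0) else 0)"
      unfolding inner_def e by (intro sum.cong refl) auto
    also have "\<dots> = (if sig0 N dout 0 \<beta> \<beta> = i \<and> sig0 N dout 0 \<beta> \<beta> = j then X \<beta> \<beta> else 0)"
      using that by simp
    finally show ?thesis using that unfolding sig0_def by simp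
  qed
  thus ?thesis unfolding pio_inner by simp
qed

lemma PIO_exists:
  assumes "0 < dout"
  shows "PIO din dout (pio_apply (max din dout) 1 (\<lambda>_. 1) (\<lambda>_ k. k) (sig0 (max din dout) dout) (\<lambda>_ _ _. 1))"
proof -
  let ?N = "max din dout"
  have perm: "sig0 ?N dout \<alpha> \<beta> permutes {..<?N}" for \<alpha> \<beta>
  proof (cases "\<beta> < ?N")
    case True
    have "\<beta> mod dout \<le> \<beta>" by simp
    hence "\<beta> mod dout < ?N" using True by linarith
    hence "\<beta> mod dout \<in> {..<?N}" by simp
    thus ?thesis unfolding sig0_def using True permutes_swap_id[of \<beta> "{..<?N}" "\<beta> mod dout"] by simp
  next
    case False thus ?thesis unfolding sig0_def by (simp add: permutes_id)
  qed
  have supp: "supported dout (pio_apply ?N 1 (\<lambda>_. 1) (\<lambda>_ k. k) (sig0 ?N dout) (\<lambda>_ _ _. 1) X)" for X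
    unfolding supported_def pio0_formula[OF assms]
  proof (intro allI impI)
    fix i j :: nat assume "dout \<le> i \<or> dout \<le> j"
    moreover have "\<beta> mod dout < dout" for \<beta> using assms by simp
    ultimately show "(\<Sum>\<beta><max din dout. if \<beta> mod dout = i \<and> \<beta> mod dout = j then X \<beta> \<beta> else 0) = 0"
      by (intro sum.neutral) (auto dest: leD)
  qed
  show ?thesis unfolding PIO_def
    apply (rule exI[of _ ?N], rule exI[of _ 1], rule exI[of _ "\<lambda>_. 1"], rule exI[of _ "\<lambda>_ k. k"],
        rule exI[of _ "sig0 ?N dout"], rule exI[of _ "\<lambda>_ _ _. 1"])
    using perm supp by auto
qed



lemma qubit_facts:
  assumes p0: "0 \<le> p" and p1: "p \<le> 1"
    and zlo: "min p (1 - p) < cmod z" and zhi: "cmod z < sqrt (p * (1 - p))"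
  defines "s \<equiv> cmod z / sqrt (p * (1 - p))"
  shows "0 \<le> s" "s < 1"
    "\<forall>a b. qubit p z a b = cnj (qubit p z b a)"
    "\<forall>a. 0 \<le> Re (qubit p z a a)"
    "\<forall>a. qubit p z a a = complex_of_real (Re (qubit p z a a))"
    "\<forall>a b. cmod (qubit p z a b) \<le> (if a = b then 1 else s) * sqrt (Re (qubit p z a a) * Re (qubit p z b b))"
    "qubit p z 0 0 + qubit p z 1 1 = 1"
    "qubit p z 0 0 = complex_of_real p" "qubit p z 1 1 = complex_of_real (1 - p)" "qubit p z 0 1 = z"
proof -
  have sq: "sqrt (p * (1 - p)) > 0" using zhi zlo by (smt (verit) norm_ge_zero)
  show s0: "0 \<le> s" unfolding s_def using sq by simp
  show "s < 1" unfolding s_def using sq zhi by simp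
  show "\<forall>a b. qubit p z a b = cnj (qubit p z b a)" unfolding qubit_def by auto
  show Ad: "\<forall>a. 0 \<le> Re (qubit p z a a)" unfolding qubit_def using p0 p1 by auto
  show "\<forall>a. qubit p z a a = complex_of_real (Re (qubit p z a a))" unfolding qubit_def by auto
  show "qubit p z 0 0 + qubit p z 1 1 = 1" unfolding qubit_def by simp
  show "qubit p z 0 0 = complex_of_real p" "qubit p z 1 1 = complex_of_real (1 - p)" "qubit p z 0 1 = z"
    unfolding qubit_def by auto
  have aux: "\<And>x q::real. q > 0 \<Longrightarrow> x = x / q * q" by simp
  have zs: "cmod z = s * sqrt (p * (1 - p))" unfolding s_def by (rule aux[OF sq])
  show "\<forall>a b. cmod (qubit p z a b) \<le> (if a = b then 1 else s) * sqrt (Re (qubit p z a a) * Re (qubit p z b b))"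
  proof (intro allI)
    fix a b :: nat
    have nn: "0 \<le> (if a = b then 1 else s) * sqrt (Re (qubit p z a a) * Re (qubit p z b b))"
      using Ad s0 by (simp add: mult_nonneg_nonneg)
    consider "a = 0 \<and> b = 0" | "a = 1 \<and> b = 1" | "a = 0 \<and> b = 1" | "a = 1 \<and> b = 0" | "qubit p z a b = 0"
      unfolding qubit_def by (smt (verit))
    thus "cmod (qubit p z a b) \<le> (if a = b then 1 else s) * sqrt (Re (qubit p z a a) * Re (qubit p z b b))"
    proof cases
      case 1 thus ?thesis unfolding qubit_def using p0 by simp
    next
      case 2
      have e: "cmod (1 - complex_of_real p) = 1 - p"
        by (metis abs_of_nonneg diff_ge_0_iff_ge norm_of_real of_real_1 of_real_diff p1)
      thus ?thesis unfolding qubit_def using 2 p1 by simp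
    next
      case 3 thus ?thesis unfolding qubit_def using zs by simp
    next
      case 4 thus ?thesis unfolding qubit_def using zs by (simp add: mult.commute)
    next
      case 5 thus ?thesis using nn by simp
    qed
  qed
qed



lemma hermit_diff:
  assumes "hermit d A" "hermit d B"
  shows "hermit d (\<lambda>i j. A i j - B i j)"
  using assms unfolding hermit_def supported_def by (metis complex_cnj_diff diff_zero)

lemma tpow_X2:
  assumes s0: "0 \<le> s" and s1: "s \<le> 1"
    and Ad: "\<forall>a. 0 \<le> Re (A a a)" and Adr: "\<forall>a. A a a = complex_of_real (Re (A a a))"
    and Ab: "\<forall>a b. cmod (A a b) \<le> (if a = b then 1 else s) * sqrt (Re (A a a) * Re (A b b))"
  shows "\<forall>k. 0 \<le> Re (tpow A n k k)"
    "\<forall>k l. k \<noteq> l \<longrightarrow> cmod (tpow A n k l) \<le> s/2 * Re (tpow A n k k) + s/2 * Re (tpow A n l l)"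
proof -
  note inv = tpow_inv[OF s0 s1 Ad Adr Ab, of n]
  show X1: "\<forall>k. 0 \<le> Re (tpow A n k k)" using inv by blast
  show "\<forall>k l. k \<noteq> l \<longrightarrow> cmod (tpow A n k l) \<le> s/2 * Re (tpow A n k k) + s/2 * Re (tpow A n l l)"
  proof (intro allI impI)
    fix k l :: nat assume "k \<noteq> l"
    have "cmod (tpow A n k l) \<le> (if k = l then 1 else s) * sqrt (Re (tpow A n k k) * Re (tpow A n l l))"
      using inv by blast
    hence "cmod (tpow A n k l) \<le> s * sqrt (Re (tpow A n k k) * Re (tpow A n l l))" using \<open>k \<noteq> l\<close> by simp
    also have "\<dots> \<le> s * ((Re (tpow A n k k) + Re (tpow A n l l)) / 2)"
      using X1 s0 by (intro mult_left_mono arith_geo_mean_sqrt) auto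
    finally show "cmod (tpow A n k l) \<le> s/2 * Re (tpow A n k k) + s/2 * Re (tpow A n l l)"
      by (simp add: algebra_simps)
  qed
qed

lemma Kd:
  assumes s0: "0 \<le> s" and s1: "s < 1"
    and hA: "\<forall>a b. A a b = cnj (A b a)"
    and Ad: "\<forall>a. 0 \<le> Re (A a a)" and Adr: "\<forall>a. A a a = complex_of_real (Re (A a a))"
    and Ab: "\<forall>a b. cmod (A a b) \<le> (if a = b then 1 else s) * sqrt (Re (A a a) * Re (A b b))"
    and P: "PIO (2^n) (2^Suc m) \<Lambda>"
  shows "(1 - s) / (2 * (1 + s)) \<le> trace_norm (2^Suc m) (\<lambda>i j. \<Lambda> (tpow A n) i j - Psi (2^Suc m) i j)"
proof -
  define Y where "Y = \<Lambda> (tpow A n)"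
  define \<delta> where "\<delta> = trace_norm (2^Suc m) (\<lambda>i j. Y i j - Psi (2^Suc m) i j)"
  have s1': "s \<le> 1" using s1 by simp
  note X = tpow_X2[OF s0 s1' Ad Adr Ab, of n]
  have hX: "\<forall>k l. tpow A n k l = cnj (tpow A n l k)" using tpow_herm[OF hA] by blast
  have hu: "0 \<le> s/2" using s0 by simp
  from PIO_out[OF P tpow_supp hX hu hu X(1) X(2)]
  have hY: "hermit (2^Suc m) Y" and bY: "\<forall>i j. i \<noteq> j \<longrightarrow> cmod (Y i j) \<le> s/2 * Re (Y i i) + s/2 * Re (Y j j)"
    unfolding Y_def by blast+
  have hPsi: "hermit (2^Suc m) (Psi (2^Suc m))" unfolding hermit_def using Psi_supp Psi_herm by blast
  have hM: "hermit (2 * 2^m) (\<lambda>i j. Y i j - Psi (2^Suc m) i j)" using hermit_diff[OF hY hPsi] by simp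
  define F where "F = (\<lambda>a b. \<Sum>c<(2::nat)^m. Y (2*c+a) (2*c+b))"
  have Fb: "cmod (F a b - 1/2) \<le> \<delta>" if "a < 2" "b < 2" for a b
  proof -
    have "(\<Sum>c<(2::nat)^m. Y (2*c+a) (2*c+b) - Psi (2^Suc m) (2*c+a) (2*c+b)) = F a b - 1/2"
      unfolding F_def sum_subtractf Psi_marg[OF that] ..
    thus ?thesis using tn_pair[OF hM that] unfolding \<delta>_def by simp
  qed
  have mb: "cmod (F 0 1) \<le> s/2 * Re (F 0 0) + s/2 * Re (F 1 1)"
    using marg_bound[OF bY, of "2^m"] unfolding F_def by simp
  have r00: "Re (F 0 0) \<le> 1/2 + \<delta>" using Fb[of 0 0] complex_Re_le_cmod[of "F 0 0 - 1/2"] by simp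
  have r11: "Re (F 1 1) \<le> 1/2 + \<delta>" using Fb[of 1 1] complex_Re_le_cmod[of "F 1 1 - 1/2"] by simp
  have c01: "1/2 - \<delta> \<le> cmod (F 0 1)"
  proof -
    have "cmod (1/2 :: complex) \<le> cmod (F 0 1) + cmod (1/2 - F 0 1)" by (rule norm_triangle_sub)
    moreover have "cmod (1/2 - F 0 1) = cmod (F 0 1 - 1/2)" by (rule norm_minus_commute)
    ultimately show ?thesis using Fb[of 0 1] by simp
  qed
  have "s/2 * Re (F 0 0) + s/2 * Re (F 1 1) \<le> s/2 * (1/2 + \<delta>) + s/2 * (1/2 + \<delta>)"
    using r00 r11 hu by (intro add_mono mult_left_mono) auto
  hence "1/2 - \<delta> \<le> s/2 + s * \<delta>" using c01 mb by (simp add: algebra_simps)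
  hence "1 - s \<le> \<delta> * (2 * (1 + s))" by (simp add: algebra_simps)
  hence "(1 - s) / (2 * (1 + s)) \<le> \<delta>" using s0 by (simp add: divide_le_eq)
  thus ?thesis unfolding \<delta>_def Y_def .
qed

lemma Kc:
  assumes hA: "\<forall>a b. A a b = cnj (A b a)" and tr: "A 0 0 + A 1 1 = 1"
    and P: "PIO D (2^Suc n) \<Lambda>"
  shows "(cmod (A 0 1) - min (Re (A 0 0)) (Re (A 1 1))) / 2 \<le> trace_norm (2^Suc n) (\<lambda>i j. \<Lambda> (Psi D) i j - tpow A (Suc n) i j)"
proof -
  define Y where "Y = \<Lambda> (Psi D)"
  define \<delta> where "\<delta> = trace_norm (2^Suc n) (\<lambda>i j. Y i j - tpow A (Suc n) i j)"
  have hX: "\<forall>k l. Psi D k l = cnj (Psi D l k)" using Psi_herm by blast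
  have X1: "\<forall>k. 0 \<le> Re (Psi D k k)" using Psi_X1 by blast
  have u1: "0 \<le> (1::real)" and u0: "0 \<le> (0::real)" by simp_all
  from PIO_out[OF P Psi_supp hX u1 u0 X1] Psi_X2(1)
  have hY: "hermit (2^Suc n) Y" and bY1: "\<forall>i j. i \<noteq> j \<longrightarrow> cmod (Y i j) \<le> 1 * Re (Y i i) + 0 * Re (Y j j)"
    unfolding Y_def by blast+
  from PIO_out[OF P Psi_supp hX u0 u1 X1] Psi_X2(2)
  have bY2: "\<forall>i j. i \<noteq> j \<longrightarrow> cmod (Y i j) \<le> 0 * Re (Y i i) + 1 * Re (Y j j)"
    unfolding Y_def by blast+
  have hT: "hermit (2^Suc n) (tpow A (Suc n))" unfolding hermit_def using tpow_supp tpow_herm[OF hA] by blast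
  have hM: "hermit (2 * 2^n) (\<lambda>i j. Y i j - tpow A (Suc n) i j)" using hermit_diff[OF hY hT] by simp
  define F where "F = (\<lambda>a b. \<Sum>c<(2::nat)^n. Y (2*c+a) (2*c+b))"
  have Fb: "cmod (F a b - A a b) \<le> \<delta>" if "a < 2" "b < 2" for a b
  proof -
    have "(\<Sum>c<(2::nat)^n. Y (2*c+a) (2*c+b) - tpow A (Suc n) (2*c+a) (2*c+b)) = F a b - A a b"
      unfolding F_def sum_subtractf tpow_marg[where A=A and n=n, OF tr that] ..
    thus ?thesis using tn_pair[OF hM that] unfolding \<delta>_def by simp
  qed
  have mb1: "cmod (F 0 1) \<le> Re (F 0 0)"
    using marg_bound[OF bY1, of "2^n"] unfolding F_def by simp
  have mb2: "cmod (F 0 1) \<le> Re (F 1 1)"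
    using marg_bound[OF bY2, of "2^n"] unfolding F_def by simp
  have r00: "Re (F 0 0) \<le> Re (A 0 0) + \<delta>" using Fb[of 0 0] complex_Re_le_cmod[of "F 0 0 - A 0 0"] by simp
  have r11: "Re (F 1 1) \<le> Re (A 1 1) + \<delta>" using Fb[of 1 1] complex_Re_le_cmod[of "F 1 1 - A 1 1"] by simp
  have c01: "cmod (A 0 1) - \<delta> \<le> cmod (F 0 1)"
  proof -
    have "cmod (A 0 1) \<le> cmod (F 0 1) + cmod (A 0 1 - F 0 1)" by (rule norm_triangle_sub)
    moreover have "cmod (A 0 1 - F 0 1) = cmod (F 0 1 - A 0 1)" by (rule norm_minus_commute)
    ultimately show ?thesis using Fb[of 0 1] by simp
  qed
  have "cmod (A 0 1) - \<delta> \<le> min (Re (A 0 0)) (Re (A 1 1)) + \<delta>"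
    using c01 mb1 mb2 r00 r11 by linarith
  hence "(cmod (A 0 1) - min (Re (A 0 0)) (Re (A 1 1))) / 2 \<le> \<delta>" by simp
  thus ?thesis unfolding \<delta>_def Y_def .
qed



lemma inf_lb:
  fixes f :: "'a \<Rightarrow> real"
  assumes "\<exists>x. P x" "\<And>x. P x \<Longrightarrow> c \<le> f x"
  shows "c \<le> Inf {f x | x. P x}"
  using assms by (intro cInf_greatest) auto

lemma not_tendsto0:
  fixes g :: "nat \<Rightarrow> real"
  assumes "\<forall>n\<ge>N0. c \<le> g n" "0 < c"
  shows "\<not> (g \<longlongrightarrow> 0) sequentially"
proof
  assume "(g \<longlongrightarrow> 0) sequentially"
  from order_tendstoD(2)[OF this assms(2)] have "eventually (\<lambda>n. g n < c) sequentially" .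
  moreover have "eventually (\<lambda>n. c \<le> g n) sequentially" using assms(1) eventually_sequentially by blast
  ultimately have "eventually (\<lambda>n. False) sequentially" by eventually_elim auto
  thus False by simp
qed

theorem corollary3:
  fixes p :: real and z :: complex
  assumes "0 \<le> p" and "p \<le> 1"
    and "min p (1 - p) < cmod z" and "cmod z < sqrt (p * (1 - p))"
  shows "C_d_PIO (qubit p z) = 0 \<and> C_c_PIO (qubit p z) = \<infinity>"
proof -
  define s where "s = cmod z / sqrt (p * (1 - p))"
  define A where "A = qubit p z"
  note qf = qubit_facts[OF assms, folded s_def A_def]
  have s0: "0 \<le> s" and s1: "s < 1" and hA: "\<forall>a b. A a b = cnj (A b a)"
    and Ad: "\<forall>a. 0 \<le> Re (A a a)" and Adr: "\<forall>a. A a a = complex_of_real (Re (A a a))"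
    and Ab: "\<forall>a b. cmod (A a b) \<le> (if a = b then 1 else s) * sqrt (Re (A a a) * Re (A b b))"
    and tr: "A 0 0 + A 1 1 = 1" and A00: "A 0 0 = complex_of_real p" and A11: "A 1 1 = complex_of_real (1 - p)"
    and A01: "A 0 1 = z"
    using qf(1) qf(2) qf(3) qf(4) qf(5) qf(6) qf(7) qf(8) qf(9) qf(10) by blast+
  have s1': "s \<le> 1" using s1 by simp
  note X = tpow_X2[OF s0 s1' Ad Adr Ab]
  have hX: "\<forall>k l. tpow A n k l = cnj (tpow A n l k)" for n using tpow_herm[OF hA] by blast
  have hu: "0 \<le> s/2" using s0 by simp
  define Sd where "Sd = (\<lambda>r n. Inf {trace_norm (2 ^ nat \<lfloor>r * real n\<rfloor>)
                   (\<lambda>i j. \<Lambda> (tpow A n) i j - Psi (2 ^ nat \<lfloor>r * real n\<rfloor>) i j) | \<Lambda>.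
                PIO (2 ^ n) (2 ^ nat \<lfloor>r * real n\<rfloor>) \<Lambda>})"
  have Sd0: "Sd 0 n = 0" for n
  proof -
    let ?N = "max (2^n) (1::nat)"
    let ?L = "pio_apply ?N 1 (\<lambda>_. 1) (\<lambda>_ k. k) (sig0 ?N 1) (\<lambda>_ _ _. 1)"
    have PL: "PIO (2^n) 1 ?L" using PIO_exists[of 1 "2^n"] by simp
    have N: "?N = 2^n" by simp
    have "?L (tpow A n) i j - Psi 1 i j = 0" for i j
    proof -
      have "?L (tpow A n) i j = (\<Sum>\<beta><?N. if \<beta> mod 1 = i \<and> \<beta> mod 1 = j then tpow A n \<beta> \<beta> else 0)"
        by (rule pio0_formula) simp
      also have "\<dots> = (if i = 0 \<and> j = 0 then (\<Sum>\<beta><2^n. tpow A n \<beta> \<beta>) else 0)" unfolding N by auto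
      also have "\<dots> = Psi 1 i j" unfolding tpow_trace[where A=A and n=n, OF tr] Psi_def by auto
      finally show ?thesis by simp
    qed
    hence z0: "trace_norm 1 (\<lambda>i j. ?L (tpow A n) i j - Psi 1 i j) = 0" using tn_zero by simp
    have "Inf {trace_norm 1 (\<lambda>i j. \<Lambda> (tpow A n) i j - Psi 1 i j) | \<Lambda>. PIO (2 ^ n) 1 \<Lambda>} = 0"
    proof (rule cInf_eq_minimum)
      show "0 \<in> {trace_norm 1 (\<lambda>i j. \<Lambda> (tpow A n) i j - Psi 1 i j) | \<Lambda>. PIO (2 ^ n) 1 \<Lambda>}"
        using PL z0 by force
      fix y assume "y \<in> {trace_norm 1 (\<lambda>i j. \<Lambda> (tpow A n) i j - Psi 1 i j) | \<Lambda>. PIO (2 ^ n) 1 \<Lambda>}"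
      then obtain \<Lambda> where P: "PIO (2^n) 1 \<Lambda>" and y: "y = trace_norm 1 (\<lambda>i j. \<Lambda> (tpow A n) i j - Psi 1 i j)" by blast
      have "hermit 1 (\<Lambda> (tpow A n))" using PIO_out[OF P tpow_supp hX hu hu X(1) X(2)] by blast
      moreover have "hermit 1 (Psi 1)" unfolding hermit_def using Psi_supp Psi_herm by blast
      ultimately show "0 \<le> y" unfolding y by (intro tn_nonneg hermit_diff)
    qed
    thus ?thesis unfolding Sd_def by simp
  qed
  have Sdpos: "\<not> (Sd r \<longlongrightarrow> 0) sequentially" if r: "r > 0" for r
  proof (rule not_tendsto0)
    show "0 < (1 - s) / (2 * (1 + s))" using s0 s1 by simp
    show "\<forall>n\<ge>nat \<lceil>1 / r\<rceil>. (1 - s) / (2 * (1 + s)) \<le> Sd r n"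
    proof (intro allI impI)
      fix n assume n: "nat \<lceil>1 / r\<rceil> \<le> n"
      hence "1 / r \<le> real n" by linarith
      hence "1 \<le> r * real n" using r by (simp add: field_simps)
      hence "1 \<le> nat \<lfloor>r * real n\<rfloor>" by linarith
      then obtain m where m: "nat \<lfloor>r * real n\<rfloor> = Suc m" by (cases "nat \<lfloor>r * real n\<rfloor>") auto
      show "(1 - s) / (2 * (1 + s)) \<le> Sd r n" unfolding Sd_def m
      proof (rule inf_lb)
        show "\<exists>\<Lambda>. PIO (2 ^ n) (2 ^ Suc m) \<Lambda>" using PIO_exists[of "2^Suc m" "2^n"] by auto
        fix \<Lambda> assume "PIO (2 ^ n) (2 ^ Suc m) \<Lambda>"
        thus "(1 - s) / (2 * (1 + s)) \<le> trace_norm (2 ^ Suc m) (\<lambda>i j. \<Lambda> (tpow A n) i j - Psi (2 ^ Suc m) i j)"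
          by (rule Kd[OF s0 s1 hA Ad Adr Ab])
      qed
    qed
  qed
  have Cd: "C_d_PIO A = 0"
  proof -
    have eq: "C_d_PIO A = Sup {ereal r | r. (Sd r \<longlongrightarrow> 0) sequentially}" unfolding C_d_PIO_def Sd_def ..
    show ?thesis unfolding eq
    proof (rule antisym)
      show "Sup {ereal r | r. (Sd r \<longlongrightarrow> 0) sequentially} \<le> 0"
      proof (rule Sup_least)
        fix x assume "x \<in> {ereal r | r. (Sd r \<longlongrightarrow> 0) sequentially}"
        then obtain r where x: "x = ereal r" and t: "(Sd r \<longlongrightarrow> 0) sequentially" by blast
        have "\<not> r > 0" using Sdpos t by blast
        thus "x \<le> 0" unfolding x by simp
      qed
      show "0 \<le> Sup {ereal r | r. (Sd r \<longlongrightarrow> 0) sequentially}"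
      proof (rule Sup_upper2)
        show "ereal 0 \<in> {ereal r | r. (Sd r \<longlongrightarrow> 0) sequentially}"
        proof -
          have "Sd 0 = (\<lambda>n. 0)" using Sd0 by (intro ext) simp
          hence "(Sd 0 \<longlongrightarrow> 0) sequentially" by simp
          thus ?thesis by blast
        qed
      qed simp
    qed
  qed
  define Sc where "Sc = (\<lambda>r n. Inf {trace_norm (2 ^ n)
                   (\<lambda>i j. \<Lambda> (Psi (2 ^ nat \<lfloor>r * real n\<rfloor>)) i j - tpow A n i j) | \<Lambda>.
                PIO (2 ^ nat \<lfloor>r * real n\<rfloor>) (2 ^ n) \<Lambda>})"
  have c'pos: "0 < (cmod (A 0 1) - min (Re (A 0 0)) (Re (A 1 1))) / 2"
    using assms(3) unfolding A00 A11 A01 by simp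
  have Scpos: "\<not> (Sc r \<longlongrightarrow> 0) sequentially" for r
  proof (rule not_tendsto0[OF _ c'pos])
    show "\<forall>n\<ge>1. (cmod (A 0 1) - min (Re (A 0 0)) (Re (A 1 1))) / 2 \<le> Sc r n"
    proof (intro allI impI)
      fix n :: nat assume "1 \<le> n"
      then obtain n' where n: "n = Suc n'" by (cases n) auto
      show "(cmod (A 0 1) - min (Re (A 0 0)) (Re (A 1 1))) / 2 \<le> Sc r n" unfolding Sc_def n
      proof (rule inf_lb)
        show "\<exists>\<Lambda>. PIO (2 ^ nat \<lfloor>r * real (Suc n')\<rfloor>) (2 ^ Suc n') \<Lambda>"
          using PIO_exists[of "2^Suc n'" "2 ^ nat \<lfloor>r * real (Suc n')\<rfloor>"] by auto
        fix \<Lambda> assume "PIO (2 ^ nat \<lfloor>r * real (Suc n')\<rfloor>) (2 ^ Suc n') \<Lambda>"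
        thus "(cmod (A 0 1) - min (Re (A 0 0)) (Re (A 1 1))) / 2 \<le> trace_norm (2 ^ Suc n')
            (\<lambda>i j. \<Lambda> (Psi (2 ^ nat \<lfloor>r * real (Suc n')\<rfloor>)) i j - tpow A (Suc n') i j)"
          by (rule Kc[OF hA tr])
      qed
    qed
  qed
  have Cc: "C_c_PIO A = \<infinity>"
  proof -
    have eq: "C_c_PIO A = Inf {ereal r | r. (Sc r \<longlongrightarrow> 0) sequentially}" unfolding C_c_PIO_def Sc_def ..
    have "{ereal r | r. (Sc r \<longlongrightarrow> 0) sequentially} = {}" using Scpos by blast
    thus ?thesis unfolding eq by (simp add: top_ereal_def)
  qed
  show ?thesis using Cd Cc unfolding A_def by simp
qed


end
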